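(* Let $p\in\mathbb{C}[z_1,\dots,z_d]$ have no zeros in $\mathbb{D}^d$, multidegree $n$, and vanish to order $M$ at $u=(1,\dots,1)$; write $p(u-\zeta)=\sum_{j\ge M}P_j(\zeta)$ and $\tilde p(u-\zeta)=\sum_{j\ge M}Q_j(\zeta)$ with $P_j,Q_j$ homogeneous of degree $j$. Suppose $f=\tilde p/p$ has non-tangential value $\nu$ at $u$. Then $f$ is non-tangentially $C^1$ at $u$ if and only if $P_M$ divides $Q_{M+1}-\nu P_{M+1}$. More generally, $f$ is non-tangentially $C^k$ at $u$ if and only if \[ F_1=\frac{Q_{M+1}-\nu P_{M+1}}{P_M},\quad F_2=\frac{Q_{M+2}-\nu P_{M+2}-F_1P_{M+1}}{P_M},\ \dots,\ F_k=\frac{Q_{M+k}-\nu P_{M+k}-\sum_{j=1}^{k-1}F_jP_{M+k-j}}{P_M} \] all belong to $\mathbb{C}[\zeta_1,\dots,\zeta_d]$ (each defined once the previous ones are polynomials). In this case $f(u-\zeta)-\big(\nu+\sum_{j=1}^kF_j(\zeta)\big)=o(r^k)$ as $\zeta\to0$ within any $AR_c$, where $r=|\zeta_1|$.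
   Context: $\mathbb{D}$ is the open unit disk; $RHP=\{\zeta\in\mathbb{C}:\mathrm{Re}\,\zeta>0\}$. $\tilde p(z)=z^n\overline{p(1/\bar z)}$ with $z^n=z_1^{n_1}\cdots z_d^{n_d}$. Vanishing to order $M$ at $u$ means the lowest nonzero homogeneous term of $\zeta\mapsto p(u-\zeta)$ has degree $M$. For $\zeta\in RHP^d$ let $D_\zeta=\{|\zeta_1|,\dots,|\zeta_d|,\mathrm{Re}\,\zeta_1,\dots,\mathrm{Re}\,\zeta_d\}$ and for $c>1$, $AR_c=\{\zeta\in RHP^d:1/c\le x/y\le c\ \forall x,y\in D_\zeta\}$. $f$ has non-tangential value $\nu$ at $u$ if $f(u-\zeta)\to\nu$ as $\zeta\to0$ in $AR_c$ for every $c>1$. $f$ is non-tangentially $C^k$ at $u$ if there is a polynomial $L$ of degree at most $k$ with $f(u-\zeta)-L(\zeta)=o(r^k)$, $r=|\zeta_1|$, as $\zeta\to0$ in $AR_c$, for every $c>1$. *)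

theory Defs
  imports "HOL-Analysis.Analysis"
begin

text \<open>Polynomials in the variables indexed by a finite type 'd (so d = CARD('d)),
  represented by their coefficient functions: a monomial is an exponent vector
  'd \<Rightarrow> nat, a polynomial is a finitely supported map from monomials to complex.\<close>

type_synonym 'd cpoly = "('d \<Rightarrow> nat) \<Rightarrow> complex"

definition mpoly :: "'d cpoly \<Rightarrow> bool" where
  "mpoly c \<longleftrightarrow> finite {\<alpha>. c \<alpha> \<noteq> 0}"

definition peval :: "'d::finite cpoly \<Rightarrow> complex ^ 'd \<Rightarrow> complex" where
  "peval c z = (\<Sum>\<alpha>\<in>{\<alpha>. c \<alpha> \<noteq> 0}. c \<alpha> * (\<Prod>i\<in>UNIV. (z $ i) ^ \<alpha> i))"

definition total_deg_mono :: "('d::finite \<Rightarrow> nat) \<Rightarrow> nat" where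
  "total_deg_mono \<alpha> = (\<Sum>i\<in>UNIV. \<alpha> i)"

text \<open>homogeneous of degree j (the zero polynomial is homogeneous of every degree)\<close>
definition homog :: "nat \<Rightarrow> 'd::finite cpoly \<Rightarrow> bool" where
  "homog j c \<longleftrightarrow> (\<forall>\<alpha>. c \<alpha> \<noteq> 0 \<longrightarrow> total_deg_mono \<alpha> = j)"

definition deg_le :: "nat \<Rightarrow> 'd::finite cpoly \<Rightarrow> bool" where
  "deg_le k c \<longleftrightarrow> (\<forall>\<alpha>. c \<alpha> \<noteq> 0 \<longrightarrow> total_deg_mono \<alpha> \<le> k)"

definition multideg :: "'d cpoly \<Rightarrow> ('d \<Rightarrow> nat) \<Rightarrow> bool" where
  "multideg c n \<longleftrightarrow> (\<forall>i. (\<forall>\<alpha>. c \<alpha> \<noteq> 0 \<longrightarrow> \<alpha> i \<le> n i) \<and> (\<exists>\<alpha>. c \<alpha> \<noteq> 0 \<and> \<alpha> i = n i))"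

text \<open>The reflection p~(z) = z^n conj(p(1/conj z)), as a polynomial (coefficientwise).\<close>
definition ptilde :: "('d \<Rightarrow> nat) \<Rightarrow> 'd cpoly \<Rightarrow> 'd cpoly" where
  "ptilde n c \<alpha> = (if (\<forall>i. \<alpha> i \<le> n i) then cnj (c (\<lambda>i. n i - \<alpha> i)) else 0)"

definition polydisc :: "(complex ^ 'd) set" where
  "polydisc = {z. \<forall>i. norm (z $ i) < 1}"

definition unit_pt :: "complex ^ 'd" where
  "unit_pt = (\<chi> i. 1)"

definition Dset :: "complex ^ 'd \<Rightarrow> real set" where
  "Dset \<zeta> = range (\<lambda>i. norm (\<zeta> $ i)) \<union> range (\<lambda>i. Re (\<zeta> $ i))"

definition AR :: "real \<Rightarrow> (complex ^ 'd) set" where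
  "AR c = {\<zeta>. (\<forall>i. 0 < Re (\<zeta> $ i)) \<and> (\<forall>x\<in>Dset \<zeta>. \<forall>y\<in>Dset \<zeta>. 1 / c \<le> x / y \<and> x / y \<le> c)}"

definition nt_value :: "(complex ^ 'd \<Rightarrow> complex) \<Rightarrow> complex ^ 'd \<Rightarrow> complex \<Rightarrow> bool" where
  "nt_value f u \<nu> \<longleftrightarrow> (\<forall>c>1. ((\<lambda>\<zeta>. f (u - \<zeta>)) \<longlongrightarrow> \<nu>) (at 0 within AR c))"

text \<open>g(zeta) = o(r^k) as zeta -> 0 within AR_c, where r = |zeta_{i0}|;
  i0 plays the role of the first coordinate index.\<close>
definition little_o_AR :: "'d \<Rightarrow> real \<Rightarrow> nat \<Rightarrow> (complex ^ 'd \<Rightarrow> complex) \<Rightarrow> bool" where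
  "little_o_AR i0 c k g \<longleftrightarrow>
     (\<forall>e>0. eventually (\<lambda>\<zeta>. norm (g \<zeta>) \<le> e * norm (\<zeta> $ i0) ^ k) (at 0 within AR c))"

definition nt_Ck :: "'d \<Rightarrow> nat \<Rightarrow> (complex ^ 'd \<Rightarrow> complex) \<Rightarrow> complex ^ 'd \<Rightarrow> bool" where
  "nt_Ck i0 k f u \<longleftrightarrow> (\<exists>L. mpoly L \<and> deg_le k L \<and>
      (\<forall>c>1. little_o_AR i0 c k (\<lambda>\<zeta>. f (u - \<zeta>) - peval L \<zeta>)))"

definition homog_expansion :: "(complex ^ 'd \<Rightarrow> complex) \<Rightarrow> (nat \<Rightarrow> 'd::finite cpoly) \<Rightarrow> bool" where
  "homog_expansion g P \<longleftrightarrow> (\<forall>j. mpoly (P j) \<and> homog j (P j)) \<and>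
     (\<exists>N. (\<forall>j>N. P j = (\<lambda>_. 0)) \<and> (\<forall>\<zeta>. g \<zeta> = (\<Sum>j\<le>N. peval (P j) \<zeta>)))"

end

theory Submission
  imports Defs "HOL-Complex_Analysis.Great_Picard"
begin
no_notation fps_nth (infixl "$" 75)

definition mon :: "('d::finite \<Rightarrow> nat) \<Rightarrow> complex ^ 'd \<Rightarrow> complex" where
  "mon \<alpha> z = (\<Prod>i\<in>UNIV. (z $ i) ^ \<alpha> i)"

lemma peval_sub:
  assumes "finite S" "{\<alpha>. c \<alpha> \<noteq> 0} \<subseteq> S"
  shows "peval c z = (\<Sum>\<alpha>\<in>S. c \<alpha> * mon \<alpha> z)"
  unfolding peval_def mon_def
  by (rule sum.mono_neutral_left) (use assms in auto)

lemma mon_scale: "mon \<alpha> (t *s z) = t ^ total_deg_mono \<alpha> * mon \<alpha> z"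
  by (simp add: mon_def total_deg_mono_def power_mult_distrib prod.distrib power_sum)

lemma homog_scale:
  assumes "homog j c"
  shows "peval c (t *s z) = t ^ j * peval c z"
proof -
  have "peval c (t *s z) = (\<Sum>\<alpha>\<in>{\<alpha>. c \<alpha> \<noteq> 0}. c \<alpha> * mon \<alpha> (t *s z))"
    by (simp add: peval_def mon_def)
  also have "\<dots> = (\<Sum>\<alpha>\<in>{\<alpha>. c \<alpha> \<noteq> 0}. t ^ j * (c \<alpha> * mon \<alpha> z))"
    using assms by (intro sum.cong) (auto simp: mon_scale homog_def)
  finally show ?thesis by (simp add: peval_def mon_def sum_distrib_left)
qed

definition hcomp :: "nat \<Rightarrow> 'd::finite cpoly \<Rightarrow> 'd cpoly" where
  "hcomp m c = (\<lambda>\<alpha>. if total_deg_mono \<alpha> = m then c \<alpha> else 0)"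

lemma hcomp_mpoly: "mpoly c \<Longrightarrow> mpoly (hcomp m c)"
  unfolding mpoly_def hcomp_def by (rule finite_subset[of _ "{\<alpha>. c \<alpha> \<noteq> 0}"]) auto

lemma hcomp_homog: "homog m (hcomp m c)"
  unfolding homog_def hcomp_def by auto

lemma mpoly_deg: "mpoly c \<Longrightarrow> \<exists>D. deg_le D c"
  unfolding mpoly_def deg_le_def
  by (rule exI[of _ "Max (total_deg_mono ` {\<alpha>. c \<alpha> \<noteq> 0})"]) auto

lemma peval_comp_sum:
  assumes "mpoly c" "deg_le D c"
  shows "peval c z = (\<Sum>m\<le>D. peval (hcomp m c) z)"
proof -
  let ?S = "{\<alpha>. c \<alpha> \<noteq> 0}"
  have fin: "finite ?S" using assms(1) by (simp add: mpoly_def)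
  have "peval c z = (\<Sum>\<alpha>\<in>?S. c \<alpha> * mon \<alpha> z)" by (rule peval_sub[OF fin]) auto
  also have "\<dots> = (\<Sum>\<alpha>\<in>?S. \<Sum>m\<le>D. hcomp m c \<alpha> * mon \<alpha> z)"
  proof (rule sum.cong[OF refl])
    fix \<alpha> assume "\<alpha> \<in> ?S"
    then have "total_deg_mono \<alpha> \<le> D" using assms(2) by (auto simp: deg_le_def)
    then show "c \<alpha> * mon \<alpha> z = (\<Sum>m\<le>D. hcomp m c \<alpha> * mon \<alpha> z)"
    proof -
      have "(\<Sum>m\<le>D. hcomp m c \<alpha> * mon \<alpha> z) = (\<Sum>m\<le>D. if m = total_deg_mono \<alpha> then c \<alpha> * mon \<alpha> z else 0)"
        by (rule sum.cong) (auto simp: hcomp_def)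
      then show ?thesis using \<open>total_deg_mono \<alpha> \<le> D\<close> by simp
    qed
  qed
  also have "\<dots> = (\<Sum>m\<le>D. \<Sum>\<alpha>\<in>?S. hcomp m c \<alpha> * mon \<alpha> z)" by (rule sum.swap)
  also have "\<dots> = (\<Sum>m\<le>D. peval (hcomp m c) z)"
    by (rule sum.cong[OF refl], rule peval_sub[symmetric, OF fin]) (auto simp: hcomp_def split: if_splits)
  finally show ?thesis .
qed

lemma peval_scale_sum:
  assumes "mpoly c" "deg_le D c"
  shows "peval c (t *s z) = (\<Sum>m\<le>D. t ^ m * peval (hcomp m c) z)"
  by (simp add: peval_comp_sum[OF assms] homog_scale[OF hcomp_homog])

lemma peval_zero[simp]: "peval (\<lambda>_. 0) z = 0"
  by (simp add: peval_def)

lemma peval_add: "mpoly a \<Longrightarrow> mpoly b \<Longrightarrow> peval (\<lambda>\<alpha>. a \<alpha> + b \<alpha>) z = peval a z + peval b z"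
proof -
  assume "mpoly a" "mpoly b"
  let ?S = "{\<alpha>. a \<alpha> \<noteq> 0} \<union> {\<alpha>. b \<alpha> \<noteq> 0}"
  have fin: "finite ?S" using \<open>mpoly a\<close> \<open>mpoly b\<close> by (simp add: mpoly_def)
  show ?thesis
    by (subst (1 2 3) peval_sub[OF fin]) (auto simp: sum.distrib algebra_simps)
qed

lemma mpoly_add: "mpoly a \<Longrightarrow> mpoly b \<Longrightarrow> mpoly (\<lambda>\<alpha>. a \<alpha> + b \<alpha>)"
  unfolding mpoly_def by (rule finite_subset[of _ "{\<alpha>. a \<alpha> \<noteq> 0} \<union> {\<alpha>. b \<alpha> \<noteq> 0}"]) auto

lemma mpoly_zero: "mpoly (\<lambda>_. 0)" by (simp add: mpoly_def)

lemma mpoly_sum: "finite I \<Longrightarrow> (\<And>j. j \<in> I \<Longrightarrow> mpoly (a j)) \<Longrightarrow> mpoly (\<lambda>\<alpha>. \<Sum>j\<in>I. a j \<alpha>)"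
  by (induction I rule: finite_induct) (auto simp: mpoly_zero intro: mpoly_add)

lemma peval_sum: "finite I \<Longrightarrow> (\<And>j. j \<in> I \<Longrightarrow> mpoly (a j)) \<Longrightarrow> peval (\<lambda>\<alpha>. \<Sum>j\<in>I. a j \<alpha>) z = (\<Sum>j\<in>I. peval (a j) z)"
  by (induction I rule: finite_induct) (auto simp: peval_add mpoly_sum)

definition cst :: "complex \<Rightarrow> 'd::finite cpoly" where
  "cst v = (\<lambda>\<alpha>. if \<alpha> = (\<lambda>_. 0) then v else 0)"

lemma cst_mpoly: "mpoly (cst v)" unfolding mpoly_def cst_def
  by (rule finite_subset[of _ "{\<lambda>_. 0}"]) auto

lemma peval_cst: "peval (cst v) z = v"
  by (subst peval_sub[of "{\<lambda>_. 0}"]) (auto simp: cst_def mon_def)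

lemma cst_deg: "deg_le 0 (cst v)"
  by (auto simp: deg_le_def cst_def total_deg_mono_def)

lemma hcomp_deg: "deg_le j (hcomp j c)"
  by (auto simp: deg_le_def hcomp_def)

lemma deg_le_mono: "deg_le j c \<Longrightarrow> j \<le> k \<Longrightarrow> deg_le k c"
  by (auto simp: deg_le_def)

lemma deg_le_add: "deg_le k a \<Longrightarrow> deg_le k b \<Longrightarrow> deg_le k (\<lambda>\<alpha>. a \<alpha> + b \<alpha>)"
  by (auto simp: deg_le_def) (metis add.right_neutral)

lemma deg_le_sum: "finite I \<Longrightarrow> (\<And>j. j \<in> I \<Longrightarrow> deg_le k (a j)) \<Longrightarrow> deg_le k (\<lambda>\<alpha>. \<Sum>j\<in>I. a j \<alpha>)"
proof (induction I rule: finite_induct)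
  case empty then show ?case by (simp add: deg_le_def)
next
  case (insert x F) then show ?case by (simp add: deg_le_add)
qed


definition polyfun :: "(complex ^ 'd \<Rightarrow> complex) \<Rightarrow> bool" where
  "polyfun f \<longleftrightarrow> (\<forall>a w. \<exists>q. \<forall>s. f (a + s *s w) = poly q s)"

lemma polyfun_const: "polyfun (\<lambda>_. v)"
  unfolding polyfun_def by (auto intro: exI[of _ "[:v:]"])

lemma polyfun_nth: "polyfun (\<lambda>z. z $ i)"
  unfolding polyfun_def by (auto intro!: exI[of _ "[:_ $ i, _ $ i:]"] simp: algebra_simps)

lemma polyfun_add: "polyfun f \<Longrightarrow> polyfun g \<Longrightarrow> polyfun (\<lambda>z. f z + g z)"
  unfolding polyfun_def by (metis poly_add)

lemma polyfun_diff: "polyfun f \<Longrightarrow> polyfun g \<Longrightarrow> polyfun (\<lambda>z. f z - g z)"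
  unfolding polyfun_def by (metis poly_diff)

lemma polyfun_mult: "polyfun f \<Longrightarrow> polyfun g \<Longrightarrow> polyfun (\<lambda>z. f z * g z)"
  unfolding polyfun_def by (metis poly_mult)

lemma polyfun_power: "polyfun f \<Longrightarrow> polyfun (\<lambda>z. f z ^ n)"
  by (induction n) (auto intro: polyfun_mult polyfun_const)

lemma polyfun_sum: "finite I \<Longrightarrow> (\<And>j. j \<in> I \<Longrightarrow> polyfun (f j)) \<Longrightarrow> polyfun (\<lambda>z. \<Sum>j\<in>I. f j z)"
  by (induction I rule: finite_induct) (auto intro: polyfun_add polyfun_const)

lemma polyfun_prod: "finite I \<Longrightarrow> (\<And>j. j \<in> I \<Longrightarrow> polyfun (f j)) \<Longrightarrow> polyfun (\<lambda>z. \<Prod>j\<in>I. f j z)"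
  by (induction I rule: finite_induct) (auto intro: polyfun_mult polyfun_const)

lemma polyfun_scale: "polyfun f \<Longrightarrow> polyfun (\<lambda>z. f (t *s z))"
  unfolding polyfun_def
proof (intro allI)
  fix a w assume H: "\<forall>a w. \<exists>q. \<forall>s. f (a + s *s w) = poly q s"
  then obtain q where "\<forall>s. f (t *s a + s *s (t *s w)) = poly q s" by blast
  moreover have "\<And>s. t *s (a + s *s w) = t *s a + s *s (t *s w)"
    by (simp add: vec_eq_iff algebra_simps)
  ultimately show "\<exists>q. \<forall>s. f (t *s (a + s *s w)) = poly q s" by metis
qed

lemma polyfun_mon: "polyfun (mon \<alpha>)"
  unfolding mon_def[abs_def] by (intro polyfun_prod polyfun_power polyfun_nth) auto

lemma polyfun_peval: "polyfun (peval c)"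
proof (cases "finite {\<alpha>. c \<alpha> \<noteq> 0}")
  case True
  then show ?thesis
    unfolding peval_def[abs_def] mon_def[symmetric]
    by (intro polyfun_sum polyfun_mult polyfun_const polyfun_mon) auto
next
  case False
  then have "peval c = (\<lambda>_. 0)" by (simp add: peval_def fun_eq_iff)
  then show ?thesis by (simp add: polyfun_const)
qed

lemma of_real_smult: "(complex_of_real x) *s w = x *\<^sub>R w"
  unfolding vec_eq_iff vector_smult_component vector_scaleR_component
  by (simp add: scaleR_conv_of_real)

lemma polyfun_ball_zero:
  assumes "polyfun f" "e > 0" "\<And>z. z \<in> ball a e \<Longrightarrow> f z = 0"
  shows "f z = 0"
proof -
  define w where "w = z - a"
  obtain q where q: "\<And>s. f (a + s *s w) = poly q s" using assms(1) unfolding polyfun_def by blast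
  define x where "x = (\<lambda>n::nat. e / (2 * (norm w + 1) * (real n + 1)))"
  have xpos: "x n > 0" for n unfolding x_def using assms(2)
    by (intro divide_pos_pos mult_pos_pos) (auto simp: add_pos_nonneg add_nonneg_pos)
  have "x n * norm w < e" for n
  proof -
    have q1: "norm w / (norm w + 1) \<le> 1" by (simp add: divide_le_eq_1 add_nonneg_pos)
    have q2: "1 / (real n + 1) \<le> 1" by (simp add: divide_le_eq_1)
    have "x n * norm w = (e/2) * (norm w / (norm w + 1)) * (1 / (real n + 1))"
      by (simp add: x_def field_simps)
    also have "\<dots> \<le> (e/2) * 1 * 1"
      using assms(2) q1 q2 by (intro mult_mono) auto
    finally show ?thesis using assms(2) by simp
  qed
  then have root: "poly q (of_real (x n)) = 0" for n
    using xpos[of n] by (subst q[symmetric], intro assms(3)) (simp add: of_real_smult dist_norm)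
  have "inj x"
  proof (rule injI)
    fix m n assume "x m = x n"
    then have "2 * (norm w + 1) * (real m + 1) = 2 * (norm w + 1) * (real n + 1)"
      using assms(2) by (simp add: x_def divide_cancel_left)
    moreover have "2 * (norm w + 1) \<noteq> 0" by (smt (verit) norm_ge_zero)
    ultimately show "m = n" by simp
  qed
  then have "inj (\<lambda>n. complex_of_real (x n))" by (auto simp: inj_def)
  then have "infinite (range (\<lambda>n. complex_of_real (x n)))" by (rule range_inj_infinite)
  moreover have "range (\<lambda>n. complex_of_real (x n)) \<subseteq> {s. poly q s = 0}" using root by auto
  ultimately have "q = 0" using poly_roots_finite finite_subset by blast
  then show ?thesis using q[of 1] by (simp add: w_def)
qed

lemma continuous_peval: "continuous_on S (peval c)"
  unfolding peval_def[abs_def] by (intro continuous_intros)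

lemma digits_unique:
  "(\<forall>k<n. a k < B) \<Longrightarrow> (\<forall>k<n. b k < (B::nat)) \<Longrightarrow> (\<Sum>k<n. a k * B^k) = (\<Sum>k<n. b k * B^k) \<Longrightarrow> \<forall>k<n. a k = b k"
proof (induction n arbitrary: a b)
  case 0 then show ?case by simp
next
  case (Suc n)
  have Bpos: "B > 0" using Suc.prems(1) by (metis gr_zeroI less_nat_zero_code zero_less_Suc)
  have sh: "(\<Sum>k<Suc n. f k * B^k) = f 0 + B * (\<Sum>k<n. f (Suc k) * B^k)" for f
    by (simp only: sum.lessThan_Suc_shift) (simp add: sum_distrib_left algebra_simps)
  have eq: "a 0 + B * (\<Sum>k<n. a (Suc k) * B^k) = b 0 + B * (\<Sum>k<n. b (Suc k) * B^k)"
    using Suc.prems(3) by (simp only: sh)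
  have a0: "a 0 < B" "b 0 < B" using Suc.prems by auto
  from arg_cong[OF eq, of "\<lambda>x. x mod B"] a0 have 0: "a 0 = b 0" by simp
  with eq Bpos have "(\<Sum>k<n. a (Suc k) * B^k) = (\<Sum>k<n. b (Suc k) * B^k)" by simp
  then have "\<forall>k<n. a (Suc k) = b (Suc k)"
    by (intro Suc.IH) (use Suc.prems in auto)
  with 0 show ?case by (metis less_Suc_eq_0_disj)
qed

lemma peval_nonzero:
  fixes c :: "'d::finite cpoly"
  assumes "mpoly c" "c \<noteq> (\<lambda>_. 0)"
  shows "\<exists>z. peval c z \<noteq> 0"
proof -
  let ?S = "{\<alpha>. c \<alpha> \<noteq> 0}"
  have fin: "finite ?S" using assms(1) by (simp add: mpoly_def)
  obtain \<alpha>0 where a0: "c \<alpha>0 \<noteq> 0" using assms(2) by auto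
  obtain idx :: "'d \<Rightarrow> nat" where idx: "bij_betw idx UNIV {0..<CARD('d)}"
    using ex_bij_betw_finite_nat[of "UNIV::'d set"] by auto
  define B where "B = Suc (Max ((\<lambda>(\<alpha>,i). \<alpha> i) ` (?S \<times> UNIV)))"
  have Bgt: "\<alpha> i < B" if "\<alpha> \<in> ?S" for \<alpha> i
  proof -
    have "\<alpha> i \<le> Max ((\<lambda>(\<alpha>,i). \<alpha> i) ` (?S \<times> UNIV))"
      using that fin by (intro Max_ge) force+
    then show ?thesis by (simp add: B_def)
  qed
  define w where "w \<alpha> = (\<Sum>i\<in>UNIV. \<alpha> i * B ^ idx i)" for \<alpha> :: "'d \<Rightarrow> nat"
  define iv where "iv = inv_into UNIV idx"
  have w_alt: "w \<alpha> = (\<Sum>k<CARD('d). \<alpha> (iv k) * B ^ k)" for \<alpha>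
  proof -
    have "(\<Sum>k\<in>{0..<CARD('d)}. \<alpha> (iv k) * B ^ k) = (\<Sum>i\<in>UNIV. \<alpha> (iv (idx i)) * B ^ idx i)"
      by (rule sum.reindex_bij_betw[symmetric, OF idx])
    also have "\<dots> = w \<alpha>" using idx by (simp add: w_def iv_def bij_betw_def)
    finally show ?thesis by (simp add: atLeast0LessThan)
  qed
  have iv_range: "iv k \<in> UNIV" for k by simp
  have winj: "\<alpha> = \<beta>" if "\<alpha> \<in> ?S" "\<beta> \<in> ?S" "w \<alpha> = w \<beta>" for \<alpha> \<beta>
  proof -
    have "\<forall>k<CARD('d). \<alpha> (iv k) = \<beta> (iv k)"
      by (rule digits_unique) (use that Bgt w_alt in auto)
    moreover have "idx i < CARD('d)" for i using idx by (auto simp: bij_betw_def)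
    moreover have "iv (idx i) = i" for i using idx by (simp add: iv_def bij_betw_def)
    ultimately show ?thesis by (metis ext)
  qed
  define q where "q = (\<Sum>\<alpha>\<in>?S. monom (c \<alpha>) (w \<alpha>))"
  have "coeff q (w \<alpha>0) = (\<Sum>\<alpha>\<in>?S. if \<alpha> = \<alpha>0 then c \<alpha> else 0)"
    unfolding q_def coeff_sum coeff_monom
    by (rule sum.cong) (use winj a0 in auto)
  also have "\<dots> = c \<alpha>0" using fin a0 by simp
  finally have "q \<noteq> 0" using a0 by auto
  then have "finite {t. poly q t = 0}" by (rule poly_roots_finite)
  then obtain t where t: "poly q t \<noteq> 0"
    by (metis (mono_tags, lifting) UNIV_I finite_UNIV_card_ge_0 infinite_UNIV_char_0 mem_Collect_eq subsetI finite_subset)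
  define z where "z = ((\<chi> i. t ^ (B ^ idx i)) :: complex ^ 'd)"
  have "mon \<alpha> z = t ^ w \<alpha>" for \<alpha>
    by (simp add: mon_def z_def w_def power_sum power_mult[symmetric] mult.commute)
  then have "peval c z = poly q t"
    by (simp add: peval_sub[OF fin subset_refl] q_def poly_sum poly_monom)
  with t show ?thesis by metis
qed


lemma poly_small:
  fixes p :: "complex poly"
  assumes small: "\<forall>\<epsilon>>0. eventually (\<lambda>t. norm (poly p (of_real t)) \<le> \<epsilon> * t^K) (at_right 0)"
  shows "m \<le> K \<Longrightarrow> coeff p m = 0"
proof (induction m rule: less_induct)
  case (less m)
  then have low: "\<And>i. i < m \<Longrightarrow> coeff p i = 0" by auto
  define g where "g t = (\<Sum>i\<le>degree p. coeff p i * t^(i-m))" for t :: complex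
  have pg: "poly p t = t^m * g t" for t
    unfolding poly_altdef g_def sum_distrib_left
  proof (rule sum.cong[OF refl])
    fix i assume "i \<in> {..degree p}"
    show "coeff p i * t ^ i = t ^ m * (coeff p i * t ^ (i - m))"
    proof (cases "i < m")
      case True then show ?thesis using low by simp
    next
      case False then have "t ^ i = t^m * t^(i-m)" by (simp add: power_add[symmetric])
      then show ?thesis by simp
    qed
  qed
  have "g 0 = (\<Sum>i\<le>degree p. if i = m then coeff p m else 0)"
    unfolding g_def
  proof (rule sum.cong[OF refl])
    fix i show "coeff p i * 0 ^ (i - m) = (if i = m then coeff p m else 0)"
      using low[of i] by (cases "i < m"; cases "i = m") auto
  qed
  also have "\<dots> = coeff p m" by (simp add: coeff_eq_0)
  finally have g0: "g 0 = coeff p m" .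
  have lim: "((\<lambda>t::real. g (of_real t)) \<longlongrightarrow> g (of_real 0)) (at_right 0)"
    unfolding g_def by (intro tendsto_intros)
  have "norm (coeff p m) \<le> \<epsilon>" if "\<epsilon> > 0" for \<epsilon>
  proof -
    have ev1: "eventually (\<lambda>t. norm (poly p (of_real t)) \<le> \<epsilon> * t^K) (at_right 0)"
      using small that by auto
    have ev2: "eventually (\<lambda>t::real. 0 < t \<and> t < 1) (at_right 0)"
      by (auto simp: eventually_at_right_field intro!: exI[of _ 1])
    have "eventually (\<lambda>t. norm (g (of_real t)) \<le> \<epsilon>) (at_right 0)"
      using ev1 ev2
    proof eventually_elim
      case (elim t)
      then have tK: "t^K \<le> t^m" using less.prems by (intro power_decreasing) auto
      have "t^m * norm (g (of_real t)) = norm (poly p (of_real t))"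
        using elim by (simp add: pg norm_mult norm_power)
      also have "\<dots> \<le> \<epsilon> * t^m" using elim(1) tK that
        by (smt (verit) mult_left_mono)
      finally have "t^m * norm (g (of_real t)) \<le> t^m * \<epsilon>" by (simp add: mult.commute)
      then show ?case using elim by simp
    qed
    then show ?thesis
      using tendsto_upperbound[OF tendsto_norm[OF lim]] g0 by (simp add: trivial_limit_at_right_real)
  qed
  then show ?case
    by (metis norm_eq_zero norm_ge_zero not_le zero_less_norm_iff half_gt_zero_iff
          field_sum_of_halves less_add_same_cancel1)
qed

definition ser :: "(nat \<Rightarrow> complex) \<Rightarrow> nat \<Rightarrow> complex poly" where
  "ser a D = (\<Sum>m\<le>D. monom (a m) m)"

lemma poly_ser: "poly (ser a D) t = (\<Sum>m\<le>D. a m * t^m)"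
  by (simp add: ser_def poly_sum poly_monom)

lemma coeff_ser: "coeff (ser a D) m = (if m \<le> D then a m else 0)"
  by (simp add: ser_def coeff_sum)

lemma degree_ser: "degree (ser a D) \<le> D"
  unfolding ser_def by (rule degree_sum_le) (auto intro: order.trans[OF degree_monom_le])


lemma AR_rhp: "\<zeta> \<in> AR c \<Longrightarrow> Re (\<zeta> $ i) > 0"
  by (simp add: AR_def)

lemma AR_ratio: "\<zeta> \<in> AR c \<Longrightarrow> x \<in> Dset \<zeta> \<Longrightarrow> y \<in> Dset \<zeta> \<Longrightarrow> 1 / c \<le> x / y \<and> x / y \<le> c"
  by (simp add: AR_def)

lemma Dset_pos: "\<zeta> \<in> AR c \<Longrightarrow> x \<in> Dset \<zeta> \<Longrightarrow> x > 0"
proof -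
  assume A: "\<zeta> \<in> AR c" "x \<in> Dset \<zeta>"
  then obtain i where "x = norm (\<zeta> $ i) \<or> x = Re (\<zeta> $ i)" by (auto simp: Dset_def)
  moreover have "Re (\<zeta> $ i) > 0" using AR_rhp[OF A(1)] .
  moreover have "Re (\<zeta> $ i) \<le> norm (\<zeta> $ i)" by (rule complex_Re_le_cmod)
  ultimately show "x > 0" by auto
qed

lemma AR_norm_le:
  assumes "\<zeta> \<in> AR c" shows "norm (\<zeta> $ j) \<le> c * norm (\<zeta> $ i)"
proof -
  have d: "norm (\<zeta> $ j) \<in> Dset \<zeta>" "norm (\<zeta> $ i) \<in> Dset \<zeta>" by (auto simp: Dset_def)
  have "norm (\<zeta> $ j) / norm (\<zeta> $ i) \<le> c" using AR_ratio[OF assms d] by simp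
  moreover have "norm (\<zeta> $ i) > 0" using Dset_pos[OF assms d(2)] .
  ultimately show ?thesis by (simp add: divide_le_eq)
qed

lemma AR_re_ge:
  assumes "\<zeta> \<in> AR c" "c > 0" shows "norm (\<zeta> $ i) \<le> c * Re (\<zeta> $ j)"
proof -
  have d: "Re (\<zeta> $ j) \<in> Dset \<zeta>" "norm (\<zeta> $ i) \<in> Dset \<zeta>" by (auto simp: Dset_def)
  have "1 / c \<le> Re (\<zeta> $ j) / norm (\<zeta> $ i)" using AR_ratio[OF assms(1) d] by simp
  moreover have "norm (\<zeta> $ i) > 0" using Dset_pos[OF assms(1) d(2)] .
  ultimately show ?thesis using assms(2) by (simp add: divide_le_eq le_divide_eq field_simps)
qed

lemma AR_scale:
  assumes "\<zeta> \<in> AR c" "x > 0" shows "x *\<^sub>R \<zeta> \<in> AR c"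
proof -
  have D: "Dset (x *\<^sub>R \<zeta>) = (\<lambda>v. x * v) ` Dset \<zeta>"
    using assms(2) by (auto simp: Dset_def image_iff)
  have "1 / c \<le> (x * a) / (x * b) \<and> (x * a) / (x * b) \<le> c" if "a \<in> Dset \<zeta>" "b \<in> Dset \<zeta>" for a b
    using AR_ratio[OF assms(1) that] assms(2) by simp
  then show ?thesis using assms by (auto simp: AR_def D)
qed

lemma ball_AR:
  assumes "c > 1" shows "ball unit_pt ((c-1)/(c+1)) \<subseteq> AR c"
proof
  fix \<zeta> :: "complex ^ 'd" assume "\<zeta> \<in> ball unit_pt ((c-1)/(c+1))"
  then have nb: "norm (\<zeta> - unit_pt) < (c-1)/(c+1)" by (simp add: dist_norm norm_minus_commute)
  let ?lo = "2 / (c+1)" and ?hi = "2 * c / (c+1)"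
  have comp: "norm (\<zeta> $ i - 1) < (c-1)/(c+1)" for i
  proof -
    have "norm ((\<zeta> - unit_pt) $ i) \<le> norm (\<zeta> - unit_pt)" by (rule Finite_Cartesian_Product.norm_nth_le)
    then show ?thesis using nb by (simp add: unit_pt_def)
  qed
  have inr: "?lo < x \<and> x < ?hi" if xD: "x \<in> Dset \<zeta>" for x
  proof -
    obtain i where "x = norm (\<zeta> $ i) \<or> x = Re (\<zeta> $ i)" using xD by (auto simp: Dset_def)
    moreover have "\<bar>norm (\<zeta> $ i) - 1\<bar> \<le> norm (\<zeta> $ i - 1)"
      by (metis norm_one norm_triangle_ineq3)
    moreover have "\<bar>Re (\<zeta> $ i) - 1\<bar> \<le> norm (\<zeta> $ i - 1)"
      by (metis abs_Re_le_cmod minus_complex.simps(1) one_complex.simps(1))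
    moreover have "1 - (c-1)/(c+1) = ?lo" "1 + (c-1)/(c+1) = ?hi" using assms by (auto simp: field_simps)
    ultimately show ?thesis using comp[of i] by auto
  qed
  have key: "a \<le> c * b" if "?lo < a" "a < ?hi" "?lo < b" "b < ?hi" for a b
  proof -
    have "?hi = c * ?lo" by simp
    then show ?thesis using that assms by (smt (verit) mult_less_cancel_left_pos)
  qed
  have re: "Re (\<zeta> $ i) > 0" for i
  proof -
    have "Re (\<zeta> $ i) \<in> Dset \<zeta>" by (auto simp: Dset_def)
    from inr[OF this] assms show ?thesis by (smt (verit) divide_pos_pos)
  qed
  have "1 / c \<le> x / y \<and> x / y \<le> c" if "x \<in> Dset \<zeta>" "y \<in> Dset \<zeta>" for x y
  proof -
    have y0: "y > 0" using inr[OF that(2)] assms by (smt (verit) divide_pos_pos)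
    have x0: "x > 0" using inr[OF that(1)] assms by (smt (verit) divide_pos_pos)
    have "x \<le> c * y" "y \<le> c * x" using key inr that by blast+
    then show ?thesis using x0 y0 assms by (simp add: divide_le_eq le_divide_eq field_simps)
  qed
  then show "\<zeta> \<in> AR c" using re by (simp add: AR_def)
qed

lemma norm_one_minus_lt:
  fixes z :: complex and t :: real
  assumes "Re z > 0" "t > 0" "t < 2 * Re z / (norm z ^ 2 + 1)"
  shows "norm (1 - of_real t * z) < 1"
proof -
  have n2: "norm z ^ 2 = Re z ^ 2 + Im z ^ 2" by (simp add: cmod_power2)
  have pos: "norm z ^ 2 + 1 > 0" by (simp add: add_nonneg_pos)
  have "t * (norm z ^ 2 + 1) < 2 * Re z" using assms(3) pos by (simp add: less_divide_eq)
  then have lt: "t * norm z ^ 2 < 2 * Re z" by (smt (verit) assms(2) mult_pos_pos distrib_left)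
  have "norm (1 - of_real t * z) ^ 2 = (1 - t * Re z)^2 + (t * Im z)^2"
    by (simp add: cmod_power2)
  also have "\<dots> = 1 - t * (2 * Re z - t * (Re z ^ 2 + Im z ^ 2))"
    by (simp add: power2_eq_square algebra_simps)
  also have "\<dots> < 1" using lt assms(2) n2 by (simp add: mult_pos_pos)
  finally show ?thesis by (smt (verit) norm_ge_zero power2_eq_square mult_le_cancel_left1 one_power2 power_mono)
qed

lemma polydisc_ev:
  assumes "\<And>i. Re (\<eta> $ i) > 0"
  shows "eventually (\<lambda>t. unit_pt - t *\<^sub>R \<eta> \<in> polydisc) (at_right (0::real))"
proof -
  have "eventually (\<lambda>t. norm (1 - of_real t * \<eta> $ i) < 1) (at_right 0)" for i
    unfolding eventually_at_right_field
    using assms[of i]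
    by (intro exI[of _ "2 * Re (\<eta> $ i) / (norm (\<eta> $ i) ^ 2 + 1)"])
       (auto intro!: norm_one_minus_lt divide_pos_pos add_nonneg_pos)
  then have "eventually (\<lambda>t. \<forall>i. norm (1 - of_real t * \<eta> $ i) < 1) (at_right 0)"
    by (rule eventually_all_finite)
  then show ?thesis
    by eventually_elim (simp add: polydisc_def unit_pt_def, simp add: scaleR_conv_of_real)
qed

lemma ray_filterlim:
  fixes \<eta> :: "complex ^ 'd"
  assumes "\<eta> \<in> AR c"
  shows "filterlim (\<lambda>t. t *\<^sub>R \<eta>) (at 0 within AR c) (at_right (0::real))"
proof (rule filterlim_at_withinI)
  have "((\<lambda>t. t *\<^sub>R \<eta>) \<longlongrightarrow> 0 *\<^sub>R \<eta>) (at_right (0::real))"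
    by (intro tendsto_intros)
  then show "((\<lambda>t. t *\<^sub>R \<eta>) \<longlongrightarrow> 0) (at_right (0::real))" by simp
  obtain i :: 'd where True by simp
  have "\<eta> \<noteq> 0" using AR_rhp[OF assms, of i] by auto
  then show "eventually (\<lambda>t. t *\<^sub>R \<eta> \<in> AR c - {0}) (at_right 0)"
    unfolding eventually_at_right_field
    by (intro exI[of _ 1]) (auto intro: AR_scale[OF assms])
qed


lemma sum_bound_low:
  fixes a :: "nat \<Rightarrow> complex" and t :: real
  assumes "\<And>j. j < M \<Longrightarrow> a j = 0" "0 \<le> t" "t \<le> 1"
  shows "norm (\<Sum>j\<le>N. a j * of_real t ^ j) \<le> t ^ M * (\<Sum>j\<le>N. norm (a j))"
proof -
  have "norm (\<Sum>j\<le>N. a j * of_real t ^ j) \<le> (\<Sum>j\<le>N. norm (a j * of_real t ^ j))"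
    by (rule norm_sum)
  also have "\<dots> \<le> (\<Sum>j\<le>N. t ^ M * norm (a j))"
  proof (rule sum_mono)
    fix j assume "j \<in> {..N}"
    show "norm (a j * of_real t ^ j) \<le> t ^ M * norm (a j)"
    proof (cases "j < M")
      case True then show ?thesis using assms by simp
    next
      case False
      then have "t ^ j \<le> t ^ M" using assms by (intro power_decreasing) auto
      then show ?thesis using assms(2) by (simp add: norm_mult norm_power mult_right_mono mult.commute)
    qed
  qed
  finally show ?thesis by (simp add: sum_distrib_left)
qed

locale setting =
  fixes p :: "'d::finite cpoly" and n :: "'d \<Rightarrow> nat" and M :: nat
    and P Q :: "nat \<Rightarrow> 'd cpoly" and \<nu> :: complex
  assumes p_poly: "mpoly p"
    and nozero: "\<forall>z\<in>polydisc. peval p z \<noteq> 0"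
    and P_exp: "homog_expansion (\<lambda>\<zeta>. peval p (unit_pt - \<zeta>)) P"
    and Q_exp: "homog_expansion (\<lambda>\<zeta>. peval (ptilde n p) (unit_pt - \<zeta>)) Q"
    and order_M: "(\<forall>j<M. P j = (\<lambda>_. 0)) \<and> P M \<noteq> (\<lambda>_. 0)"
    and ntv: "nt_value (\<lambda>z. peval (ptilde n p) z / peval p z) unit_pt \<nu>"
begin

definition g where "g \<zeta> = peval p (unit_pt - \<zeta>)"
definition h where "h \<zeta> = peval (ptilde n p) (unit_pt - \<zeta>)"

lemma P_mpoly: "mpoly (P j)" and P_homog: "homog j (P j)"
  and Q_mpoly: "mpoly (Q j)" and Q_homog: "homog j (Q j)"
  using P_exp Q_exp by (auto simp: homog_expansion_def)

lemma P_low: "j < M \<Longrightarrow> P j = (\<lambda>_. 0)" using order_M by auto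

lemma exN: "\<exists>N. (\<forall>j>N. P j = (\<lambda>_. 0) \<and> Q j = (\<lambda>_. 0)) \<and>
   (\<forall>\<zeta>. g \<zeta> = (\<Sum>j\<le>N. peval (P j) \<zeta>)) \<and> (\<forall>\<zeta>. h \<zeta> = (\<Sum>j\<le>N. peval (Q j) \<zeta>))"
proof -
  obtain N1 where N1: "\<forall>j>N1. P j = (\<lambda>_. 0)" "\<forall>\<zeta>. g \<zeta> = (\<Sum>j\<le>N1. peval (P j) \<zeta>)"
    using P_exp by (auto simp: homog_expansion_def g_def)
  obtain N2 where N2: "\<forall>j>N2. Q j = (\<lambda>_. 0)" "\<forall>\<zeta>. h \<zeta> = (\<Sum>j\<le>N2. peval (Q j) \<zeta>)"
    using Q_exp by (auto simp: homog_expansion_def h_def)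
  define N where "N = max N1 N2"
  have "(\<Sum>j\<le>N. peval (P j) \<zeta>) = (\<Sum>j\<le>N1. peval (P j) \<zeta>)" for \<zeta>
    by (rule sum.mono_neutral_right) (use N1 in \<open>auto simp: N_def\<close>)
  moreover have "(\<Sum>j\<le>N. peval (Q j) \<zeta>) = (\<Sum>j\<le>N2. peval (Q j) \<zeta>)" for \<zeta>
    by (rule sum.mono_neutral_right) (use N2 in \<open>auto simp: N_def\<close>)
  ultimately show ?thesis using N1 N2 by (intro exI[of _ N]) (auto simp: N_def)
qed

definition N where "N = (SOME N. (\<forall>j>N. P j = (\<lambda>_. 0) \<and> Q j = (\<lambda>_. 0)) \<and>
   (\<forall>\<zeta>. g \<zeta> = (\<Sum>j\<le>N. peval (P j) \<zeta>)) \<and> (\<forall>\<zeta>. h \<zeta> = (\<Sum>j\<le>N. peval (Q j) \<zeta>)))"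

lemma N_prop: "\<And>j. j > N \<Longrightarrow> P j = (\<lambda>_. 0)" "\<And>j. j > N \<Longrightarrow> Q j = (\<lambda>_. 0)"
  "g \<zeta> = (\<Sum>j\<le>N. peval (P j) \<zeta>)" "h \<zeta> = (\<Sum>j\<le>N. peval (Q j) \<zeta>)"
  using someI_ex[OF exN] unfolding N_def[symmetric] by auto

lemma g_scale: "g (t *s \<eta>) = (\<Sum>j\<le>N. peval (P j) \<eta> * t ^ j)"
  by (simp add: N_prop homog_scale[OF P_homog] mult.commute)

lemma h_scale: "h (t *s \<eta>) = (\<Sum>j\<le>N. peval (Q j) \<eta> * t ^ j)"
  by (simp add: N_prop homog_scale[OF Q_homog] mult.commute)

lemma g_scaleR: "g (t *\<^sub>R \<eta>) = (\<Sum>j\<le>N. peval (P j) \<eta> * of_real t ^ j)"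
  using g_scale[of "of_real t"] by (simp add: of_real_smult)

lemma h_scaleR: "h (t *\<^sub>R \<eta>) = (\<Sum>j\<le>N. peval (Q j) \<eta> * of_real t ^ j)"
  using h_scale[of "of_real t"] by (simp add: of_real_smult)

lemma g_ray_bound: "0 \<le> t \<Longrightarrow> t \<le> 1 \<Longrightarrow> norm (g (t *\<^sub>R \<eta>)) \<le> t ^ M * (\<Sum>j\<le>N. norm (peval (P j) \<eta>))"
  unfolding g_scaleR by (rule sum_bound_low) (auto simp: P_low)

lemma PM_nonzero: "\<exists>z. peval (P M) z \<noteq> 0"
  using peval_nonzero[OF P_mpoly] order_M by auto

lemma g_nonzero_ray:
  assumes "\<And>i. Re (\<eta> $ i) > 0"
  shows "eventually (\<lambda>t. g (t *\<^sub>R \<eta>) \<noteq> 0) (at_right 0)"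
  using polydisc_ev[OF assms] by eventually_elim (use nozero in \<open>auto simp: g_def\<close>)

lemma f_eq: "(\<lambda>z. peval (ptilde n p) z / peval p z) (unit_pt - \<zeta>) = h \<zeta> / g \<zeta>"
  by (simp add: g_def h_def)

lemma ray_h_minus:
  assumes eta: "\<eta> \<in> AR c" and lim: "((\<lambda>t. h (t *\<^sub>R \<eta>) / g (t *\<^sub>R \<eta>) - L t) \<longlongrightarrow> 0) (at_right 0)"
      and e: "\<epsilon> > 0"
  shows "eventually (\<lambda>t. norm (h (t *\<^sub>R \<eta>) - L t * g (t *\<^sub>R \<eta>)) \<le> \<epsilon> * t ^ M) (at_right 0)"
proof -
  define C where "C = (\<Sum>j\<le>N. norm (peval (P j) \<eta>))"
  have C0: "C \<ge> 0" unfolding C_def by (intro sum_nonneg) auto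
  have ev1: "eventually (\<lambda>t. norm (h (t *\<^sub>R \<eta>) / g (t *\<^sub>R \<eta>) - L t) < \<epsilon> / (C + 1)) (at_right 0)"
    using tendstoD[OF lim, of "\<epsilon> / (C+1)"] e C0 by (simp add: dist_norm)
  have ev2: "eventually (\<lambda>t::real. 0 < t \<and> t < 1) (at_right 0)"
    by (auto simp: eventually_at_right_field intro!: exI[of _ 1])
  have ev3: "eventually (\<lambda>t. g (t *\<^sub>R \<eta>) \<noteq> 0) (at_right 0)"
    by (rule g_nonzero_ray) (use AR_rhp[OF eta] in auto)
  show ?thesis using ev1 ev2 ev3
  proof eventually_elim
    case (elim t)
    have "h (t *\<^sub>R \<eta>) - L t * g (t *\<^sub>R \<eta>) = (h (t *\<^sub>R \<eta>) / g (t *\<^sub>R \<eta>) - L t) * g (t *\<^sub>R \<eta>)"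
      using elim(3) by (simp add: field_simps)
    then have "norm (h (t *\<^sub>R \<eta>) - L t * g (t *\<^sub>R \<eta>)) = norm (h (t *\<^sub>R \<eta>) / g (t *\<^sub>R \<eta>) - L t) * norm (g (t *\<^sub>R \<eta>))"
      by (simp add: norm_mult)
    also have "\<dots> \<le> (\<epsilon> / (C + 1)) * (t ^ M * C)"
      using elim g_ray_bound[of t \<eta>] C0 e by (intro mult_mono) (auto simp: C_def)
    also have "\<dots> \<le> \<epsilon> * t ^ M"
    proof -
      have "C / (C + 1) \<le> 1" using C0 by simp
      then have "(\<epsilon> / (C + 1)) * (t ^ M * C) = (\<epsilon> * t^M) * (C / (C+1))" by (simp add: field_simps)
      also have "\<dots> \<le> (\<epsilon> * t^M) * 1" using \<open>C / (C + 1) \<le> 1\<close> e elim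
        by (intro mult_left_mono) auto
      finally show ?thesis by simp
    qed
    finally show ?case .
  qed
qed

lemma ball_ray_extend:
  assumes pf: "polyfun F" and c: "c > 1"
    and H: "\<And>\<eta>. \<eta> \<in> ball unit_pt ((c-1)/(c+1)) \<Longrightarrow> F \<eta> = 0"
  shows "F \<eta> = 0"
  by (rule polyfun_ball_zero[OF pf _ H]) (use c in auto)

lemma QP_low: "m \<le> M \<Longrightarrow> peval (Q m) \<eta> = \<nu> * peval (P m) \<eta>"
proof -
  assume mM: "m \<le> M"
  have "peval (Q m) \<eta> - \<nu> * peval (P m) \<eta> = 0"
  proof (rule ball_ray_extend[of _ 2])
    show "polyfun (\<lambda>\<eta>. peval (Q m) \<eta> - \<nu> * peval (P m) \<eta>)"
      by (intro polyfun_diff polyfun_mult polyfun_const polyfun_peval)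
    fix \<eta> :: "complex ^ 'd" assume "\<eta> \<in> ball unit_pt ((2 - 1) / (2 + 1 :: real))"
    then have eta: "\<eta> \<in> AR 2" using ball_AR[of 2] by auto
    have lim: "((\<lambda>t. h (t *\<^sub>R \<eta>) / g (t *\<^sub>R \<eta>) - \<nu>) \<longlongrightarrow> 0) (at_right 0)"
    proof -
      have "((\<lambda>\<zeta>. h \<zeta> / g \<zeta>) \<longlongrightarrow> \<nu>) (at 0 within AR 2)"
        using ntv unfolding nt_value_def f_eq by auto
      from filterlim_compose[OF this ray_filterlim[OF eta]]
      have "((\<lambda>t. h (t *\<^sub>R \<eta>) / g (t *\<^sub>R \<eta>)) \<longlongrightarrow> \<nu>) (at_right 0)" .
      then show ?thesis using tendsto_diff[OF _ tendsto_const, of _ \<nu> _ \<nu>] by auto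
    qed
    define pR where "pR = ser (\<lambda>m. peval (Q m) \<eta> - \<nu> * peval (P m) \<eta>) N"
    have "poly pR (of_real t) = h (t *\<^sub>R \<eta>) - \<nu> * g (t *\<^sub>R \<eta>)" for t
      by (simp add: pR_def poly_ser h_scaleR g_scaleR sum_distrib_left sum_subtractf algebra_simps)
    then have small: "\<forall>\<epsilon>>0. eventually (\<lambda>t. norm (poly pR (of_real t)) \<le> \<epsilon> * t^M) (at_right 0)"
      using ray_h_minus[OF eta lim] by simp
    have "coeff pR m = 0" by (rule poly_small[OF small mM])
    then show "peval (Q m) \<eta> - \<nu> * peval (P m) \<eta> = 0"
      using N_prop(1,2)[of m] by (auto simp: pR_def coeff_ser split: if_splits)
  qed (simp)
  then show ?thesis by simp
qed

end

lemma polyfun_holo: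
  assumes "polyfun F" shows "(\<lambda>s. F (a + s *s w)) holomorphic_on A"
proof -
  obtain q where q: "\<And>s. F (a + s *s w) = poly q s" using assms unfolding polyfun_def by blast
  have "(\<lambda>s. poly q s) holomorphic_on A" by (intro holomorphic_intros)
  then show ?thesis by (simp add: q)
qed

lemma norm_vec_le_sum: "norm (x :: 'a::real_normed_vector ^ 'n) \<le> (\<Sum>i\<in>UNIV. norm (x $ i))"
  unfolding norm_vec_def by (rule L2_set_le_sum) auto

lemma cont_bound:
  assumes "compact K" "continuous_on K f"
  shows "\<exists>B. \<forall>x\<in>K. norm (f x :: 'b::real_normed_vector) \<le> B"
proof -
  have "bounded (f ` K)" by (rule compact_imp_bounded[OF compact_continuous_image[OF assms(2,1)]])
  then show ?thesis unfolding bounded_iff by auto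
qed

lemma cont_lower:
  assumes "compact K" "continuous_on K f" "\<And>x. x \<in> K \<Longrightarrow> f x \<noteq> (0::'b::real_normed_vector)"
  shows "\<exists>\<delta>>0. \<forall>x\<in>K. \<delta> \<le> norm (f x)"
proof (cases "K = {}")
  case True then show ?thesis by (auto intro: exI[of _ 1])
next
  case False
  have "continuous_on K (\<lambda>x. norm (f x))" by (intro continuous_intros assms(2))
  from continuous_attains_inf[OF assms(1) False this] obtain x0 where
    "x0 \<in> K" "\<forall>y\<in>K. norm (f x0) \<le> norm (f y)" by auto
  then show ?thesis using assms(3)[of x0] by (intro exI[of _ "norm (f x0)"]) auto
qed

definition Kset :: "real \<Rightarrow> (complex ^ 'd::finite) set" where
  "Kset c = {\<eta>. \<forall>i. norm (\<eta> $ i) \<le> c \<and> 1 / c \<le> Re (\<eta> $ i)}"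

lemma compact_Kset: "compact (Kset c :: (complex ^ 'd::finite) set)"
proof -
  have cl: "closed (Kset c :: (complex ^ 'd) set)"
  proof -
    have "(Kset c :: (complex ^ 'd) set) = (\<Inter>i. {\<eta>. norm (\<eta> $ i) \<le> c} \<inter> {\<eta>. 1 / c \<le> Re (\<eta> $ i)})"
      by (auto simp: Kset_def)
    also have "closed \<dots>"
      by (intro closed_INT ballI closed_Int closed_Collect_le continuous_intros continuous_on_id)
    finally show ?thesis .
  qed
  have sub: "Kset c \<subseteq> cball (0 :: complex ^ 'd) (\<Sum>i\<in>(UNIV::'d set). c)"
  proof
    fix \<eta> :: "complex ^ 'd" assume "\<eta> \<in> Kset c"
    then have "norm \<eta> \<le> (\<Sum>i\<in>(UNIV::'d set). c)"
      using norm_vec_le_sum[of \<eta>] sum_mono[of UNIV "\<lambda>i. norm (\<eta> $ i)" "\<lambda>i. c"]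
      by (auto simp: Kset_def)
    then show "\<eta> \<in> cball 0 (\<Sum>i\<in>(UNIV::'d set). c)" by simp
  qed
  have "bounded (Kset c :: (complex ^ 'd) set)" by (rule bounded_subset[OF bounded_cball sub])
  with cl show ?thesis by (simp add: compact_eq_bounded_closed)
qed

lemma T_sub_K:
  fixes \<eta> :: "complex ^ 'd::finite"
  assumes "\<eta> \<in> AR c" "norm (\<eta> $ i0) = 1" "c > 1"
  shows "\<eta> \<in> Kset c"
proof -
  have "norm (\<eta> $ i) \<le> c" for i using AR_norm_le[OF assms(1), of i i0] assms(2) by simp
  moreover have "1 / c \<le> Re (\<eta> $ i)" for i
    using AR_re_ge[OF assms(1), of i0 i] assms by (simp add: divide_le_eq mult.commute)
  ultimately show ?thesis by (simp add: Kset_def)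
qed

lemma Kset_rhp: "c > 0 \<Longrightarrow> \<eta> \<in> Kset c \<Longrightarrow> Re (\<eta> $ i) > 0"
  unfolding Kset_def by (smt (verit) divide_pos_pos mem_Collect_eq)


lemma convex_halfplane_Re: "convex {s::complex. \<delta> < Re (a + s * b)}"
  unfolding convex_alt
proof (intro ballI allI impI)
  fix x y :: complex and u :: real
  assume x: "x \<in> {s. \<delta> < Re (a + s * b)}" and y: "y \<in> {s. \<delta> < Re (a + s * b)}" and u: "0 \<le> u \<and> u \<le> 1"
  define A where "A = Re (a + x * b)"
  define B where "B = Re (a + y * b)"
  have eq: "Re (a + ((1 - u) *\<^sub>R x + u *\<^sub>R y) * b) = (1 - u) * A + u * B"
    by (simp add: A_def B_def scaleR_conv_of_real algebra_simps)
  have "(1 - u) * (A - \<delta>) + u * (B - \<delta>) > 0"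
  proof (cases "u < 1")
    case True
    then have "(1 - u) * (A - \<delta>) > 0" using x by (simp add: A_def)
    moreover have "u * (B - \<delta>) \<ge> 0" using y u by (simp add: B_def)
    ultimately show ?thesis by simp
  next
    case False then have "u = 1" using u by simp
    then show ?thesis using y by (simp add: B_def)
  qed
  then have "\<delta> < (1 - u) * A + u * B" by (simp add: algebra_simps)
  then show "(1 - u) *\<^sub>R x + u *\<^sub>R y \<in> {s. \<delta> < Re (a + s * b)}" unfolding mem_Collect_eq eq .
qed

context setting begin

lemma M_le_N: "M \<le> N"
proof (rule ccontr)
  assume "\<not> M \<le> N"
  then have "P M = (\<lambda>_. 0)" using N_prop(1)[of M] by simp
  then show False using order_M by simp
qed

lemma PM_nonzero_ball: "\<exists>\<eta> :: complex ^ 'd. \<eta> \<in> ball unit_pt 1 \<and> peval (P M) \<eta> \<noteq> 0"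
proof (rule ccontr)
  assume "\<not> (\<exists>\<eta> :: complex ^ 'd. \<eta> \<in> ball unit_pt 1 \<and> peval (P M) \<eta> \<noteq> 0)"
  then have H: "\<And>\<eta>. \<eta> \<in> ball (unit_pt :: complex ^ 'd) 1 \<Longrightarrow> peval (P M) \<eta> = 0" by blast
  have "peval (P M) z = 0" for z
    by (rule polyfun_ball_zero[OF polyfun_peval, where e=1 and a=unit_pt, OF _ H]) simp_all
  with PM_nonzero show False by blast
qed

lemma PM_rhp:
  fixes \<zeta>0 :: "complex ^ 'd"
  assumes rz: "\<And>i. Re (\<zeta>0 $ i) > 0"
  shows "peval (P M) \<zeta>0 \<noteq> 0"
proof
  assume z0: "peval (P M) \<zeta>0 = 0"
  obtain \<eta> :: "complex ^ 'd" where eta: "\<eta> \<in> ball unit_pt 1" "peval (P M) \<eta> \<noteq> 0"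
    using PM_nonzero_ball by blast
  have reta: "Re (\<eta> $ i) > 0" for i
  proof -
    have "norm ((unit_pt - \<eta>) $ i) \<le> norm (unit_pt - \<eta>)" by (rule Finite_Cartesian_Product.norm_nth_le)
    then have "norm (1 - \<eta> $ i) < 1" using eta(1) by (simp add: unit_pt_def dist_norm)
    then show ?thesis using abs_Re_le_cmod[of "1 - \<eta> $ i"] by auto
  qed
  define w where "w = \<eta> - \<zeta>0"
  define x where "x s = \<zeta>0 + s *s w" for s
  have xi: "x s $ i = \<zeta>0 $ i + s * w $ i" for s i by (simp add: x_def)
  define A where "A = range (\<lambda>i. Re (\<zeta>0 $ i)) \<union> range (\<lambda>i. Re (\<eta> $ i))"
  have Afin: "finite A" "A \<noteq> {}" by (auto simp: A_def)
  have Apos: "\<forall>a\<in>A. 0 < a" using rz reta by (auto simp: A_def)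
  define \<delta> where "\<delta> = Min A / 2"
  have Minpos: "Min A > 0" using Min_gr_iff[OF Afin] Apos by auto
  then have \<delta>pos: "\<delta> > 0" by (simp add: \<delta>_def)
  have \<delta>lt: "\<delta> < Re (\<zeta>0 $ i)" "\<delta> < Re (\<eta> $ i)" for i
  proof -
    have "Min A \<le> Re (\<zeta>0 $ i)" "Min A \<le> Re (\<eta> $ i)" using Afin by (auto simp: A_def)
    then show "\<delta> < Re (\<zeta>0 $ i)" "\<delta> < Re (\<eta> $ i)" using Minpos by (auto simp: \<delta>_def)
  qed
  define K where "K = norm \<zeta>0 + 2 * norm w"
  have K0: "K \<ge> 0" by (simp add: K_def)
  obtain N0 :: nat where N0: "real N0 > (K^2 + 1) / (2 * \<delta>)" using reals_Archimedean2 by blast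
  have rhs0: "(K^2 + 1) / (2 * \<delta>) > 0" using \<delta>pos by (simp add: add_nonneg_pos)
  then have N0pos: "real N0 > 0" using N0 by linarith
  define \<tau> where "\<tau> m = 1 / (real m + real N0)" for m :: nat
  have N01: "real N0 \<ge> 1" using N0pos by simp
  have \<tau>pos: "\<tau> m > 0" for m using N0pos unfolding \<tau>_def by simp
  have \<tau>le: "\<tau> m \<le> inverse (real (Suc m))" for m
    unfolding \<tau>_def inverse_eq_divide using N01 by (intro divide_left_mono) auto
  have \<tau>1: "\<tau> m \<le> 1" for m
  proof -
    have "inverse (real (Suc m)) \<le> 1" by (simp add: inverse_le_1_iff)
    then show ?thesis using \<tau>le[of m] by linarith
  qed
  have \<tau>small: "\<tau> m < 2 * \<delta> / (K^2 + 1)" for m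
  proof -
    have "\<tau> m \<le> 1 / real N0" unfolding \<tau>_def using N01 by (intro divide_left_mono) auto
    also have "\<dots> < 2 * \<delta> / (K^2 + 1)"
    proof -
      have Kp: "K^2 + 1 > 0" by (simp add: add_nonneg_pos)
      have "K^2 + 1 < real N0 * (2 * \<delta>)" using N0 \<delta>pos by (simp add: divide_less_eq)
      then show ?thesis using Kp N0pos by (simp add: divide_less_eq less_divide_eq mult.commute)
    qed
    finally show ?thesis .
  qed
  define S where "S = (\<Inter>i. {s. \<delta> < Re (\<zeta>0 $ i + s * w $ i)}) \<inter> ball 0 2"
  have openS: "open S" unfolding S_def
    by (intro open_Int open_INT ballI open_Collect_less continuous_intros) auto
  have convS: "convex S" unfolding S_def
    by (intro convex_Int convex_INT convex_halfplane_Re convex_ball)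
  have conS: "connected S" by (rule convex_connected[OF convS])
  have S0: "0 \<in> S" using \<delta>lt by (simp add: S_def)
  have S1: "1 \<in> S" using \<delta>lt by (simp add: S_def w_def)
  have Sx: "\<delta> < Re (x s $ i)" "norm s < 2" if "s \<in> S" for s i using that by (auto simp: S_def xi)
  define G where "G s = peval (P M) (x s)" for s
  define Fn where "Fn m s = (\<Sum>j\<le>N. peval (P j) (x s) * of_real (\<tau> m) ^ (j - M))" for m s
  have holG: "G holomorphic_on S"
    unfolding G_def[abs_def] x_def by (rule polyfun_holo[OF polyfun_peval])
  have holF: "Fn m holomorphic_on S" for m
  proof -
    have "polyfun (\<lambda>z. \<Sum>j\<le>N. peval (P j) z * of_real (\<tau> m) ^ (j - M))"
      by (intro polyfun_sum polyfun_mult polyfun_peval polyfun_const) auto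
    from polyfun_holo[OF this, of \<zeta>0 w S] show ?thesis
      unfolding Fn_def[abs_def] x_def .
  qed
  have rel: "g (\<tau> m *\<^sub>R x s) = of_real (\<tau> m) ^ M * Fn m s" for m s
    unfolding g_scaleR Fn_def sum_distrib_left
  proof (rule sum.cong[OF refl])
    fix j assume "j \<in> {..N}"
    show "peval (P j) (x s) * complex_of_real (\<tau> m) ^ j =
          complex_of_real (\<tau> m) ^ M * (peval (P j) (x s) * complex_of_real (\<tau> m) ^ (j - M))"
    proof (cases "j < M")
      case True then show ?thesis by (simp add: P_low)
    next
      case False then have "complex_of_real (\<tau> m) ^ j = complex_of_real (\<tau> m) ^ M * complex_of_real (\<tau> m) ^ (j - M)"
        by (simp add: power_add[symmetric])
      then show ?thesis by simp
    qed
  qed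
  have nz: "Fn m s \<noteq> 0" if "s \<in> S" for m s
  proof -
    have "norm (1 - of_real (\<tau> m) * x s $ i) < 1" for i
    proof (rule norm_one_minus_lt)
      show "0 < Re (x s $ i)" using Sx(1)[OF that, of i] \<delta>pos by simp
      show "0 < \<tau> m" by (rule \<tau>pos)
      have nx: "norm (x s $ i) \<le> K"
      proof -
        have "norm (x s $ i) \<le> norm (\<zeta>0 $ i) + norm s * norm (w $ i)"
          by (simp add: xi norm_triangle_le norm_mult)
        also have "\<dots> \<le> norm \<zeta>0 + 2 * norm w"
          using Sx(2)[OF that] Finite_Cartesian_Product.norm_nth_le[of \<zeta>0 i] Finite_Cartesian_Product.norm_nth_le[of w i]
          by (intro add_mono mult_mono) auto
        finally show ?thesis by (simp add: K_def)
      qed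
      have "2 * \<delta> / (K^2 + 1) \<le> 2 * Re (x s $ i) / (norm (x s $ i) ^ 2 + 1)"
        using Sx(1)[OF that, of i] \<delta>pos nx
        by (intro frac_le) (auto intro: power_mono add_nonneg_pos)
      then show "\<tau> m < 2 * Re (x s $ i) / (norm (x s $ i) ^ 2 + 1)" using \<tau>small[of m] by linarith
    qed
    then have "unit_pt - \<tau> m *\<^sub>R x s \<in> polydisc"
      by (simp add: polydisc_def unit_pt_def, simp add: scaleR_conv_of_real)
    then have "g (\<tau> m *\<^sub>R x s) \<noteq> 0" using nozero by (simp add: g_def)
    then show ?thesis by (simp add: rel)
  qed
  have ulim: "uniform_limit C Fn G sequentially" if cC: "compact C" "C \<subseteq> S" for C
  proof -
    have "continuous_on C (\<lambda>s. \<Sum>j\<le>N. norm (peval (P j) (x s)))"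
    proof -
      have sw: "x = (\<lambda>s. \<chi> i. \<zeta>0 $ i + s * w $ i)" by (auto simp: vec_eq_iff x_def fun_eq_iff)
      have cx: "continuous_on C x" unfolding sw by (intro continuous_intros)
      show ?thesis
        by (intro continuous_intros continuous_on_compose2[OF continuous_peval[of UNIV] cx]) auto
    qed
    then obtain B where B: "\<And>s. s \<in> C \<Longrightarrow> norm (\<Sum>j\<le>N. norm (peval (P j) (x s))) \<le> B"
      using cont_bound[OF cC(1)] by blast
    have diff: "norm (Fn m s - G s) \<le> \<tau> m * B" if "s \<in> C" for m s
    proof -
      have Gs: "G s = (\<Sum>j\<le>N. if j = M then peval (P j) (x s) else 0)"
        using M_le_N by (simp add: G_def)
      have e1: "peval (P j) (x s) * (of_real (\<tau> m) ^ (j - M) - (if j = M then 1 else 0)) =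
          peval (P j) (x s) * of_real (\<tau> m) ^ (j - M) - (if j = M then peval (P j) (x s) else 0)" for j
        by (simp add: right_diff_distrib)
      have "Fn m s - G s = (\<Sum>j\<le>N. peval (P j) (x s) * (of_real (\<tau> m) ^ (j - M) - (if j = M then 1 else 0)))"
        unfolding e1 sum_subtractf Gs Fn_def ..
      also have "norm \<dots> \<le> (\<Sum>j\<le>N. norm (peval (P j) (x s)) * \<tau> m)"
      proof (rule order.trans[OF norm_sum sum_mono])
        fix j assume "j \<in> {..N}"
        show "norm (peval (P j) (x s) * (of_real (\<tau> m) ^ (j - M) - (if j = M then 1 else 0))) \<le> norm (peval (P j) (x s)) * \<tau> m"
        proof (cases "j < M")
          case True then show ?thesis by (simp add: P_low)
        next
          case False
          show ?thesis
          proof (cases "j = M")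
            case True then show ?thesis using \<tau>pos[of m] by simp
          next
            case False2: False
            then have jM: "j - M = Suc (j - M - 1)" using False by simp
            have "\<tau> m ^ (j - M) = \<tau> m * \<tau> m ^ (j - M - 1)" by (subst jM) simp
            also have "\<dots> \<le> \<tau> m * 1" using \<tau>pos[of m] \<tau>1[of m]
              by (intro mult_left_mono power_le_one) (auto simp: less_imp_le)
            finally have "\<tau> m ^ (j - M) \<le> \<tau> m" by simp
            then show ?thesis using False2 \<tau>pos[of m]
              by (simp add: norm_mult norm_power mult_left_mono)
          qed
        qed
      qed
      also have "\<dots> = \<tau> m * (\<Sum>j\<le>N. norm (peval (P j) (x s)))" by (simp add: sum_distrib_left mult.commute)
      also have "\<dots> \<le> \<tau> m * B" using B[OF that] \<tau>pos[of m] by (intro mult_left_mono) auto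
      finally show ?thesis .
    qed
    show ?thesis
    proof (rule uniform_limitI)
      fix e :: real assume e: "e > 0"
      have "eventually (\<lambda>m. inverse (real (Suc m)) < e / (\<bar>B\<bar> + 1)) sequentially"
        using order_tendstoD(2)[OF LIMSEQ_inverse_real_of_nat, of "e / (\<bar>B\<bar> + 1)"] e by simp
      then show "eventually (\<lambda>m. \<forall>s\<in>C. dist (Fn m s) (G s) < e) sequentially"
      proof eventually_elim
        case (elim m)
        show ?case
        proof
          fix s assume s: "s \<in> C"
          have "dist (Fn m s) (G s) \<le> \<tau> m * B" using diff[OF s] by (simp add: dist_norm)
          also have "\<dots> \<le> \<tau> m * (\<bar>B\<bar> + 1)" using \<tau>pos[of m] by (intro mult_left_mono) auto
          also have "\<dots> < e / (\<bar>B\<bar> + 1) * (\<bar>B\<bar> + 1)"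
            using elim \<tau>le[of m] by (intro mult_strict_right_mono) auto
          also have "\<dots> = e" by simp
          finally show "dist (Fn m s) (G s) < e" .
        qed
      qed
    qed
  qed
  have nonconst: "\<not> G constant_on S"
  proof
    assume "G constant_on S"
    then have "G 0 = G 1" using S0 S1 by (auto simp: constant_on_def)
    moreover have "G 0 = 0" using z0 by (simp add: G_def x_def)
    moreover have "G 1 \<noteq> 0" using eta(2) by (simp add: G_def x_def w_def)
    ultimately show False by simp
  qed
  have "G 0 \<noteq> 0"
    by (rule Hurwitz_no_zeros[OF openS conS holF holG ulim nonconst nz S0])
  then show False using z0 by (simp add: G_def x_def)
qed

end

lemma homog_extend0:
  assumes "polyfun f" "\<And>s. s \<noteq> 0 \<Longrightarrow> f (s *s \<eta>) = s^j * f \<eta>"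
  shows "f (s *s \<eta>) = s^j * f \<eta>"
proof -
  obtain q where q: "\<And>s. f (0 + s *s \<eta>) = poly q s" using assms(1) unfolding polyfun_def by blast
  define r where "r = q - monom (f \<eta>) j"
  have "poly r s = 0" if "s \<noteq> 0" for s
    using q[of s] assms(2)[OF that] by (simp add: r_def poly_monom mult.commute)
  then have "UNIV - {0} \<subseteq> {s. poly r s = 0}" by auto
  moreover have "infinite (UNIV - {0::complex})" by (simp add: infinite_UNIV_char_0)
  ultimately have "r = 0" using poly_roots_finite finite_subset by blast
  then have "poly q s = poly (monom (f \<eta>) j) s" by (simp add: r_def)
  then show ?thesis using q[of s] by (simp add: poly_monom mult.commute)
qed

lemma polyfun_prod_zero:
  assumes "polyfun D" "continuous_on UNIV Pm" "Pm z0 \<noteq> (0::complex)" "\<And>\<eta>. Pm \<eta> * D \<eta> = 0"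
  shows "D \<eta> = 0"
proof -
  have "open {y. Pm y \<noteq> 0}" by (rule open_Collect_neq[OF assms(2) continuous_on_const])
  then obtain e where e: "e > 0" "ball z0 e \<subseteq> {y. Pm y \<noteq> 0}"
    using assms(3) by (auto simp: open_contains_ball)
  have "D y = 0" if "y \<in> ball z0 e" for y using e(2) that assms(4)[of y] by auto
  then show ?thesis by (rule polyfun_ball_zero[OF assms(1) e(1)])
qed

lemma tail_bound:
  fixes a :: "nat \<Rightarrow> complex"
  assumes "\<And>j. j < L \<Longrightarrow> a j = 0" "\<And>j. j \<le> D \<Longrightarrow> norm (a j) \<le> B" "0 \<le> r" "r \<le> 1" "L \<le> D"
  shows "norm ((\<Sum>j\<le>D. a j * of_real r ^ j) - a L * of_real r ^ L) \<le> (real D + 1) * B * r^(L+1)"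
proof -
  have "(\<Sum>j\<le>D. a j * of_real r ^ j) - a L * of_real r ^ L = (\<Sum>j\<le>D. if j = L then 0 else a j * of_real r ^ j)"
  proof -
    have "(\<Sum>j\<le>D. a j * of_real r ^ j) = (\<Sum>j\<le>D. (if j = L then 0 else a j * of_real r ^ j) + (if j = L then a j * of_real r ^ j else 0))"
      by (rule sum.cong) auto
    also have "\<dots> = (\<Sum>j\<le>D. if j = L then 0 else a j * of_real r ^ j) + a L * of_real r ^ L"
      using assms(5) by (simp add: sum.distrib)
    finally show ?thesis by simp
  qed
  also have "norm \<dots> \<le> (\<Sum>j\<le>D. B * r^(L+1))"
  proof (rule order.trans[OF norm_sum sum_mono])
    fix j assume j: "j \<in> {..D}"
    show "norm (if j = L then 0 else a j * of_real r ^ j) \<le> B * r ^ (L + 1)"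
    proof (cases "j \<le> L")
      case True
      then have "j < L \<or> j = L" by auto
      then show ?thesis
      proof
        assume "j < L" then show ?thesis using assms(1)[of j] assms(2)[of 0] assms(3) assms(5)
          by (simp add: order.trans[OF norm_ge_zero])
      next
        assume "j = L" then show ?thesis using assms(2)[of 0] assms(3) assms(5)
          by (simp add: order.trans[OF norm_ge_zero])
      qed
    next
      case False
      then have "r ^ j \<le> r ^ (L+1)" using assms(3,4) by (intro power_decreasing) auto
      moreover have "norm (a j) \<le> B" using assms(2) j by auto
      ultimately show ?thesis using False assms(3)
        by (simp add: norm_mult norm_power mult_mono' order.trans[OF norm_ge_zero])
    qed
  qed
  also have "\<dots> = (real D + 1) * B * r^(L+1)" by simp
  finally show ?thesis .
qed

lemma conv_low:
  fixes a X :: "nat \<Rightarrow> complex"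
  assumes "\<And>l. l < M \<Longrightarrow> X l = 0" "m < M"
  shows "(\<Sum>i\<le>m. a i * X (m - i)) = 0"
  using assms by (intro sum.neutral) auto

lemma conv_split:
  fixes a X :: "nat \<Rightarrow> complex"
  assumes X: "\<And>l. l < M \<Longrightarrow> X l = 0"
  shows "(\<Sum>i\<le>M+j. a i * X (M + j - i)) = (\<Sum>i\<le>j. a i * X (M + j - i))"
  by (rule sum.mono_neutral_right) (auto intro: X)

lemma conv_split2:
  fixes a X :: "nat \<Rightarrow> complex"
  assumes X: "\<And>l. l < M \<Longrightarrow> X l = 0" and j: "j \<ge> 1"
  shows "(\<Sum>i\<le>M+j. a i * X (M + j - i)) = a 0 * X (M + j) + a j * X M + (\<Sum>i\<in>{1..<j}. a i * X (M + j - i))"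
proof -
  have "{..j} = insert 0 (insert j {1..<j})" using j by auto
  then have "(\<Sum>i\<le>j. a i * X (M + j - i)) = a 0 * X (M + j) + (a j * X M + (\<Sum>i\<in>{1..<j}. a i * X (M + j - i)))"
    using j by (simp add: sum.insert)
  moreover have "(\<Sum>i\<le>M+j. a i * X (M + j - i)) = (\<Sum>i\<le>j. a i * X (M + j - i))"
    by (rule sum.mono_neutral_right) (auto intro: X)
  ultimately show ?thesis by (simp add: add.assoc)
qed

lemma poly_as_sum: fixes p :: "complex poly" assumes "degree p \<le> D" shows "poly p x = (\<Sum>i\<le>D. coeff p i * x ^ i)"
  unfolding poly_altdef by (rule sum.mono_neutral_left) (use assms in \<open>auto simp: coeff_eq_0\<close>)

locale ifdir = setting p n M P Q \<nu> for p :: "'d::finite cpoly" and n M P Q \<nu> +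
  fixes k :: nat and F :: "nat \<Rightarrow> 'd cpoly"
  assumes k1: "k \<ge> 1"
  and hypF: "\<forall>j\<in>{1..k}. mpoly (F j) \<and> (\<forall>\<zeta>. peval (P M) \<zeta> * peval (F j) \<zeta> =
                   peval (Q (M + j)) \<zeta> - \<nu> * peval (P (M + j)) \<zeta>
                   - (\<Sum>i\<in>{1..<j}. peval (F i) \<zeta> * peval (P (M + j - i)) \<zeta>))"
begin

lemma F_mpoly: "j \<in> {1..k} \<Longrightarrow> mpoly (F j)" using hypF by auto

lemma F_eq: "j \<in> {1..k} \<Longrightarrow> peval (P M) \<zeta> * peval (F j) \<zeta> =
                   peval (Q (M + j)) \<zeta> - \<nu> * peval (P (M + j)) \<zeta>
                   - (\<Sum>i\<in>{1..<j}. peval (F i) \<zeta> * peval (P (M + j - i)) \<zeta>)"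
  using hypF by auto

lemma F_homog: "j \<in> {1..k} \<Longrightarrow> peval (F j) (t *s \<eta>) = t^j * peval (F j) \<eta>"
proof (induction j arbitrary: t \<eta> rule: less_induct)
  case (less j)
  have step: "peval (F j) (t *s \<eta>) = t^j * peval (F j) \<eta>" if t0: "t \<noteq> 0" for t \<eta>
  proof -
    define D where "D \<eta> = peval (F j) (t *s \<eta>) - t^j * peval (F j) \<eta>" for \<eta>
    have pD: "polyfun D" unfolding D_def[abs_def]
      by (rule polyfun_diff[OF polyfun_scale[OF polyfun_peval] polyfun_mult[OF polyfun_const polyfun_peval]])
    have "peval (P M) \<eta> * D \<eta> = 0" for \<eta>
    proof -
      have sc: "(\<Sum>i\<in>{1..<j}. peval (F i) (t *s \<eta>) * peval (P (M + j - i)) (t *s \<eta>)) =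
            t^(M+j) * (\<Sum>i\<in>{1..<j}. peval (F i) \<eta> * peval (P (M + j - i)) \<eta>)"
        unfolding sum_distrib_left
      proof (rule sum.cong[OF refl])
        fix i assume i: "i \<in> {1..<j}"
        then have A: "peval (F i) (t *s \<eta>) = t^i * peval (F i) \<eta>" using less.prems by (intro less.IH) auto
        have B: "peval (P (M + j - i)) (t *s \<eta>) = t^(M + j - i) * peval (P (M + j - i)) \<eta>"
          by (rule homog_scale[OF P_homog])
        have C: "t^i * t^(M + j - i) = t^(M+j)" using i by (simp add: power_add[symmetric])
        have "peval (F i) (t *s \<eta>) * peval (P (M + j - i)) (t *s \<eta>) =
            (t^i * t^(M + j - i)) * (peval (F i) \<eta> * peval (P (M + j - i)) \<eta>)"
          by (simp only: A B mult_ac)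
        then show "peval (F i) (t *s \<eta>) * peval (P (M + j - i)) (t *s \<eta>) =
            t ^ (M + j) * (peval (F i) \<eta> * peval (P (M + j - i)) \<eta>)"
          by (simp only: C)
      qed
      have "t^M * (peval (P M) \<eta> * peval (F j) (t *s \<eta>)) = peval (P M) (t *s \<eta>) * peval (F j) (t *s \<eta>)"
        by (simp add: homog_scale[OF P_homog])
      also have "\<dots> = peval (Q (M + j)) (t *s \<eta>) - \<nu> * peval (P (M + j)) (t *s \<eta>)
                   - (\<Sum>i\<in>{1..<j}. peval (F i) (t *s \<eta>) * peval (P (M + j - i)) (t *s \<eta>))"
        by (rule F_eq[OF less.prems])
      also have "\<dots> = t^(M+j) * peval (Q (M + j)) \<eta> - \<nu> * (t^(M+j) * peval (P (M + j)) \<eta>)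
                   - t^(M+j) * (\<Sum>i\<in>{1..<j}. peval (F i) \<eta> * peval (P (M + j - i)) \<eta>)"
        unfolding sc by (simp only: homog_scale[OF Q_homog] homog_scale[OF P_homog])
      also have "\<dots> = t^(M+j) * (peval (Q (M + j)) \<eta> - \<nu> * peval (P (M + j)) \<eta>
                   - (\<Sum>i\<in>{1..<j}. peval (F i) \<eta> * peval (P (M + j - i)) \<eta>))"
        by (simp only: right_diff_distrib mult.left_commute)
      also have "\<dots> = t^(M+j) * (peval (P M) \<eta> * peval (F j) \<eta>)"
        by (simp only: F_eq[OF less.prems])
      also have "\<dots> = t^M * (peval (P M) \<eta> * (t^j * peval (F j) \<eta>))"
        by (simp only: power_add mult_ac)
      finally have "t^M * (peval (P M) \<eta> * D \<eta>) = 0" by (simp add: D_def algebra_simps)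
      then show ?thesis using t0 by simp
    qed
    moreover obtain z0 where z0: "peval (P M) z0 \<noteq> 0" using PM_nonzero by blast
    ultimately have "D \<eta> = 0" for \<eta>
      by (intro polyfun_prod_zero[OF pD continuous_peval z0])
    then show ?thesis by (simp add: D_def)
  qed
  show ?case
    by (rule homog_extend0[OF polyfun_peval step])
qed

end

context ifdir begin

definition Lf where "Lf \<zeta> = \<nu> + (\<Sum>j\<in>{1..k}. peval (F j) \<zeta>)"
definition aa where "aa \<eta> i = (if i = 0 then \<nu> else if i \<le> k then peval (F i) \<eta> else 0)"
definition pE where "pE \<eta> = ser (\<lambda>j. peval (Q j) \<eta>) N - ser (aa \<eta>) k * ser (\<lambda>j. peval (P j) \<eta>) N"

lemma F_homogR: "j \<in> {1..k} \<Longrightarrow> peval (F j) (t *\<^sub>R \<eta>) = of_real t ^ j * peval (F j) \<eta>"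
  using F_homog[of j "of_real t" \<eta>] by (simp add: of_real_smult)

lemma Lf_scale: "Lf (t *\<^sub>R \<eta>) = (\<Sum>i\<le>k. aa \<eta> i * of_real t ^ i)"
proof -
  have "{..k} = insert 0 {1..k}" by auto
  then have "(\<Sum>i\<le>k. aa \<eta> i * of_real t ^ i) = aa \<eta> 0 + (\<Sum>i\<in>{1..k}. aa \<eta> i * of_real t ^ i)"
    by (simp add: sum.insert)
  also have "(\<Sum>i\<in>{1..k}. aa \<eta> i * of_real t ^ i) = (\<Sum>i\<in>{1..k}. peval (F i) (t *\<^sub>R \<eta>))"
    by (rule sum.cong) (auto simp: aa_def F_homogR mult.commute)
  finally show ?thesis by (simp add: Lf_def aa_def)
qed

lemma E_poly: "h (t *\<^sub>R \<eta>) - Lf (t *\<^sub>R \<eta>) * g (t *\<^sub>R \<eta>) = poly (pE \<eta>) (of_real t)"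
  by (simp add: pE_def poly_ser h_scaleR g_scaleR Lf_scale)

lemma coeffP: "coeff (ser (\<lambda>j. peval (P j) \<eta>) N) l = peval (P l) \<eta>"
  using N_prop(1)[of l] by (auto simp: coeff_ser)

lemma coeffQ: "coeff (ser (\<lambda>j. peval (Q j) \<eta>) N) l = peval (Q l) \<eta>"
  using N_prop(2)[of l] by (auto simp: coeff_ser)

lemma coeffA: "coeff (ser (aa \<eta>) k) i = aa \<eta> i"
  by (auto simp: coeff_ser aa_def)

lemma pE_coeff: "coeff (pE \<eta>) m = peval (Q m) \<eta> - (\<Sum>i\<le>m. aa \<eta> i * peval (P (m - i)) \<eta>)"
  by (simp add: pE_def coeff_mult coeffP coeffQ coeffA)

lemma pE_low: "m \<le> M + k \<Longrightarrow> coeff (pE \<eta>) m = 0"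
proof -
  assume mk: "m \<le> M + k"
  have X: "\<And>l. l < M \<Longrightarrow> peval (P l) \<eta> = 0" by (simp add: P_low)
  show ?thesis
  proof (cases "m < M")
    case True
    then show ?thesis
      using conv_low[of M "\<lambda>l. peval (P l) \<eta>" m "aa \<eta>", OF X True] QP_low[of m \<eta>] X[OF True]
      by (simp add: pE_coeff)
  next
    case False
    define j where "j = m - M"
    have j: "m = M + j" "j \<le> k" using False mk by (auto simp: j_def)
    show ?thesis
    proof (cases "j = 0")
      case True
      have "(\<Sum>i\<le>M. aa \<eta> i * peval (P (M - i)) \<eta>) = (\<Sum>i\<le>(0::nat). aa \<eta> i * peval (P (M - i)) \<eta>)"
        by (rule sum.mono_neutral_right) (auto simp: P_low)
      then show ?thesis using True j QP_low[of M \<eta>] by (simp add: pE_coeff aa_def)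
    next
      case False
      then have j1: "j \<ge> 1" by simp
      have "(\<Sum>i\<le>M + j. aa \<eta> i * peval (P (M + j - i)) \<eta>) =
          aa \<eta> 0 * peval (P (M + j)) \<eta> + aa \<eta> j * peval (P M) \<eta> + (\<Sum>i\<in>{1..<j}. aa \<eta> i * peval (P (M + j - i)) \<eta>)"
        by (rule conv_split2[OF X j1])
      also have "(\<Sum>i\<in>{1..<j}. aa \<eta> i * peval (P (M + j - i)) \<eta>) = (\<Sum>i\<in>{1..<j}. peval (F i) \<eta> * peval (P (M + j - i)) \<eta>)"
        by (rule sum.cong) (use j in \<open>auto simp: aa_def\<close>)
      also have "aa \<eta> j = peval (F j) \<eta>" using j j1 by (simp add: aa_def)
      also have "aa \<eta> 0 = \<nu>" by (simp add: aa_def)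
      also have "peval (F j) \<eta> * peval (P M) \<eta> = peval (Q (M + j)) \<eta> - \<nu> * peval (P (M + j)) \<eta>
                   - (\<Sum>i\<in>{1..<j}. peval (F i) \<eta> * peval (P (M + j - i)) \<eta>)"
        using F_eq[of j \<eta>] j j1 by (simp add: mult.commute)
      finally have "(\<Sum>i\<le>M + j. aa \<eta> i * peval (P (M + j - i)) \<eta>) = peval (Q (M + j)) \<eta>"
        by simp
      then show ?thesis using j by (simp add: pE_coeff)
    qed
  qed
qed

lemma pE_degree: "degree (pE \<eta>) \<le> N + k"
proof -
  have "degree (ser (aa \<eta>) k * ser (\<lambda>j. peval (P j) \<eta>) N) \<le> k + N"
    using degree_mult_le[of "ser (aa \<eta>) k" "ser (\<lambda>j. peval (P j) \<eta>) N"] degree_ser[of "aa \<eta>" k]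
      degree_ser[of "\<lambda>j. peval (P j) \<eta>" N] by linarith
  moreover have "degree (ser (\<lambda>j. peval (Q j) \<eta>) N) \<le> N" by (rule degree_ser)
  ultimately show ?thesis unfolding pE_def
    using degree_diff_le_max[of "ser (\<lambda>j. peval (Q j) \<eta>) N" "ser (aa \<eta>) k * ser (\<lambda>j. peval (P j) \<eta>) N"]
    by linarith
qed

lemma bounds:
  assumes c: "c > 1"
  shows "\<exists>\<delta>>0. \<exists>B\<ge>0. \<forall>\<eta>\<in>Kset c. \<delta> \<le> norm (peval (P M) \<eta>) \<and> (\<forall>j. norm (peval (P j) \<eta>) \<le> B)
            \<and> (\<forall>j. norm (peval (Q j) \<eta>) \<le> B) \<and> (\<forall>i. norm (aa \<eta> i) \<le> B)"
proof -
  have "\<exists>\<delta>>0. \<forall>\<eta>\<in>Kset c. \<delta> \<le> norm (peval (P M) \<eta>)"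
  proof (rule cont_lower[OF compact_Kset continuous_peval])
    fix \<eta> :: "complex ^ 'd" assume "\<eta> \<in> Kset c"
    then have "\<And>i. Re (\<eta> $ i) > 0" using Kset_rhp c by (metis less_trans zero_less_one)
    then show "peval (P M) \<eta> \<noteq> 0" by (rule PM_rhp)
  qed
  then obtain \<delta> where \<delta>: "\<delta> > 0" "\<And>\<eta>. \<eta> \<in> Kset c \<Longrightarrow> \<delta> \<le> norm (peval (P M) \<eta>)" by blast
  define \<Phi> where "\<Phi> \<eta> = (\<Sum>j\<le>N. norm (peval (P j) \<eta>) + norm (peval (Q j) \<eta>)) + (\<Sum>i\<in>{1..k}. norm (peval (F i) \<eta>)) + norm \<nu>" for \<eta>
  have "continuous_on (Kset c) \<Phi>" unfolding \<Phi>_def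
    by (intro continuous_intros continuous_on_subset[OF continuous_peval[of UNIV]]) auto
  then obtain B0 where B0: "\<And>\<eta>. \<eta> \<in> Kset c \<Longrightarrow> norm (\<Phi> \<eta>) \<le> B0" using cont_bound[OF compact_Kset] by blast
  define B where "B = max B0 0"
  have PhiB: "\<Phi> \<eta> \<le> B" if "\<eta> \<in> Kset c" for \<eta> using B0[OF that] by (simp add: B_def)
  have s1: "(\<Sum>j\<le>N. norm (peval (P j) \<eta>) + norm (peval (Q j) \<eta>)) \<le> \<Phi> \<eta>"
    "(\<Sum>i\<in>{1..k}. norm (peval (F i) \<eta>)) \<le> \<Phi> \<eta>" "norm \<nu> \<le> \<Phi> \<eta>" for \<eta>
  proof -
    have n1: "0 \<le> (\<Sum>j\<le>N. norm (peval (P j) \<eta>) + norm (peval (Q j) \<eta>))" by (intro sum_nonneg) auto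
    have n2: "0 \<le> (\<Sum>i\<in>{1..k}. norm (peval (F i) \<eta>))" by (intro sum_nonneg) auto
    have n3: "0 \<le> norm \<nu>" by simp
    show "(\<Sum>j\<le>N. norm (peval (P j) \<eta>) + norm (peval (Q j) \<eta>)) \<le> \<Phi> \<eta>"
      "(\<Sum>i\<in>{1..k}. norm (peval (F i) \<eta>)) \<le> \<Phi> \<eta>" "norm \<nu> \<le> \<Phi> \<eta>"
      using n1 n2 n3 unfolding \<Phi>_def by linarith+
  qed
  have PQ: "norm (peval (P j) \<eta>) \<le> B \<and> norm (peval (Q j) \<eta>) \<le> B" if "\<eta> \<in> Kset c" for \<eta> j
  proof (cases "j \<le> N")
    case True
    have "norm (peval (P j) \<eta>) + norm (peval (Q j) \<eta>) \<le> (\<Sum>j\<le>N. norm (peval (P j) \<eta>) + norm (peval (Q j) \<eta>))"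
      using True by (intro member_le_sum[where f="\<lambda>j. norm (peval (P j) \<eta>) + norm (peval (Q j) \<eta>)"]) auto
    moreover have "norm (peval (P j) \<eta>) \<ge> 0" "norm (peval (Q j) \<eta>) \<ge> 0" by simp_all
    ultimately show ?thesis using s1(1)[of \<eta>] PhiB[OF that] by (intro conjI) linarith+
  next
    case False then show ?thesis using N_prop(1,2)[of j] by (auto simp: B_def)
  qed
  have A: "norm (aa \<eta> i) \<le> B" if "\<eta> \<in> Kset c" for \<eta> i
  proof -
    consider "i = 0" | "i \<in> {1..k}" | "i > k" by force
    then show ?thesis
    proof cases
      case 1 then show ?thesis using s1(3)[of \<eta>] PhiB[OF that] by (simp add: aa_def)
    next
      case 2
      then have "norm (peval (F i) \<eta>) \<le> (\<Sum>i\<in>{1..k}. norm (peval (F i) \<eta>))"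
        by (intro member_le_sum[where f="\<lambda>i. norm (peval (F i) \<eta>)"]) auto
      then show ?thesis using 2 s1(2)[of \<eta>] PhiB[OF that] by (simp add: aa_def)
    next
      case 3 then show ?thesis by (simp add: aa_def B_def)
    qed
  qed
  show ?thesis using \<delta> PQ A by (intro exI[of _ \<delta>] conjI exI[of _ B]) (auto simp: B_def)
qed

lemma H_main:
  assumes c: "c > 1"
  shows "little_o_AR i0 c k (\<lambda>\<zeta>. h \<zeta> / g \<zeta> - Lf \<zeta>)"
proof -
  obtain \<delta> B where \<delta>: "\<delta> > 0" and B: "B \<ge> 0"
    and bnd: "\<And>\<eta>. \<eta> \<in> Kset c \<Longrightarrow> \<delta> \<le> norm (peval (P M) \<eta>) \<and> (\<forall>j. norm (peval (P j) \<eta>) \<le> B)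
            \<and> (\<forall>j. norm (peval (Q j) \<eta>) \<le> B) \<and> (\<forall>i. norm (aa \<eta> i) \<le> B)"
    using bounds[OF c] by blast
  define D where "D = N + k"
  define B1 where "B1 = B + (real D + 1) * B^2"
  define C1 where "C1 = (real D + 1) * B1"
  define C2 where "C2 = (real N + 1) * B"
  have C1: "C1 \<ge> 0" and C2: "C2 \<ge> 0" using B by (auto simp: C1_def B1_def C2_def)
  have coeffb: "norm (coeff (pE \<eta>) m) \<le> B1" if "\<eta> \<in> Kset c" "m \<le> D" for \<eta> m
  proof -
    have T: "norm (coeff (pE \<eta>) m) \<le> norm (peval (Q m) \<eta>) + norm (\<Sum>i\<le>m. aa \<eta> i * peval (P (m - i)) \<eta>)"
      unfolding pE_coeff by (rule norm_triangle_ineq4)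
    have "norm (\<Sum>i\<le>m. aa \<eta> i * peval (P (m - i)) \<eta>) \<le> (\<Sum>i\<le>m. B * B)"
      using bnd[OF that(1)] by (intro order.trans[OF norm_sum sum_mono]) (simp add: norm_mult mult_mono' B)
    also have "\<dots> = (real m + 1) * B^2" by (simp add: power2_eq_square)
    also have "\<dots> \<le> (real D + 1) * B^2" using that(2) by (intro mult_right_mono) auto
    finally have S: "norm (\<Sum>i\<le>m. aa \<eta> i * peval (P (m - i)) \<eta>) \<le> (real D + 1) * B^2" .
    have "norm (peval (Q m) \<eta>) \<le> B" using bnd[OF that(1)] by blast
    then show ?thesis using T S by (simp add: B1_def)
  qed
  show ?thesis unfolding little_o_AR_def
  proof (intro allI impI)
    fix e :: real assume e: "e > 0"
    define d where "d = min 1 (min (\<delta> / (2 * C2 + 1)) (e * \<delta> / (2 * C1 + 1)))"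
    have d0: "d > 0" using \<delta> e C1 C2 by (simp add: d_def)
    show "eventually (\<lambda>\<zeta>. norm (h \<zeta> / g \<zeta> - Lf \<zeta>) \<le> e * norm (\<zeta> $ i0) ^ k) (at 0 within AR c)"
      unfolding eventually_at
    proof (intro exI[of _ d] conjI d0 ballI impI)
      fix \<zeta> :: "complex ^ 'd" assume \<zeta>: "\<zeta> \<in> AR c" and dz: "\<zeta> \<noteq> 0 \<and> dist \<zeta> 0 < d"
      define r where "r = norm (\<zeta> $ i0)"
      have r0: "r > 0" using Dset_pos[OF \<zeta>, of r] by (auto simp: r_def Dset_def)
      have rd: "r < d" using dz Finite_Cartesian_Product.norm_nth_le[of \<zeta> i0] by (simp add: r_def dist_norm)
      have r1: "r \<le> 1" using rd by (simp add: d_def)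
      have rC2: "(2 * C2 + 1) * r < \<delta>" using rd C2 by (simp add: d_def less_divide_eq mult.commute)
      have rC1: "(2 * C1 + 1) * r < e * \<delta>" using rd C1 by (simp add: d_def less_divide_eq mult.commute)
      define \<eta> where "\<eta> = (1 / r) *\<^sub>R \<zeta>"
      have \<eta>AR: "\<eta> \<in> AR c" unfolding \<eta>_def using \<zeta> r0 by (intro AR_scale) auto
      have "norm (\<eta> $ i0) = 1" using r0 by (simp add: \<eta>_def r_def)
      then have \<eta>K: "\<eta> \<in> Kset c" using T_sub_K[OF \<eta>AR _ c] by simp
      have z\<eta>: "\<zeta> = r *\<^sub>R \<eta>" using r0 by (simp add: \<eta>_def)
      note bn = bnd[OF \<eta>K]
      have gt: "norm (g \<zeta> - peval (P M) \<eta> * of_real r ^ M) \<le> C2 * r^(M+1)"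
        unfolding z\<eta> g_scaleR C2_def
        by (rule tail_bound) (use bn r0 r1 M_le_N in \<open>auto simp: P_low\<close>)
      have glow: "norm (g \<zeta>) \<ge> \<delta> / 2 * r^M"
      proof -
        have "norm (peval (P M) \<eta> * of_real r ^ M) \<ge> \<delta> * r^M"
          using bn r0 by (simp add: norm_mult norm_power mult_right_mono)
        moreover have "C2 * r^(M+1) = (C2 * r) * r^M" by simp
        moreover have "C2 * r \<le> \<delta> / 2" using rC2 r0 by (simp add: algebra_simps)
        moreover have "r^M > 0" using r0 by simp
        ultimately have "C2 * r^(M+1) \<le> \<delta>/2 * r^M" by (metis mult_right_mono less_imp_le)
        moreover have "norm (peval (P M) \<eta> * of_real r ^ M - g \<zeta>) = norm (g \<zeta> - peval (P M) \<eta> * of_real r ^ M)"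
          by (rule norm_minus_commute)
        moreover have "\<delta> / 2 * r^M = (\<delta> * r^M) / 2" by simp
        ultimately show ?thesis using gt norm_triangle_ineq2[of "peval (P M) \<eta> * of_real r ^ M" "g \<zeta>"]
          \<open>norm (peval (P M) \<eta> * of_real r ^ M) \<ge> \<delta> * r^M\<close>
          by linarith
      qed
      have g0: "g \<zeta> \<noteq> 0" using glow \<delta> r0 by (smt (verit) norm_zero zero_less_power mult_pos_pos half_gt_zero)
      have Et: "norm (h \<zeta> - Lf \<zeta> * g \<zeta>) \<le> C1 * r^(M+k+1)"
      proof -
        have "h \<zeta> - Lf \<zeta> * g \<zeta> = (\<Sum>m\<le>D. coeff (pE \<eta>) m * of_real r ^ m) - coeff (pE \<eta>) (M+k) * of_real r ^ (M+k)"
          unfolding z\<eta> E_poly by (simp add: poly_as_sum[OF pE_degree[unfolded D_def[symmetric]]] pE_low)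
        also have "norm \<dots> \<le> (real D + 1) * B1 * r^(M+k+1)"
          by (rule tail_bound) (use r0 r1 M_le_N coeffb[OF \<eta>K] pE_low in \<open>auto simp: D_def\<close>)
        finally show ?thesis by (simp add: C1_def)
      qed
      have "norm (h \<zeta> / g \<zeta> - Lf \<zeta>) = norm (h \<zeta> - Lf \<zeta> * g \<zeta>) / norm (g \<zeta>)"
        using g0 by (simp add: norm_divide[symmetric] diff_divide_distrib)
      also have "\<dots> \<le> C1 * r^(M+k+1) / (\<delta> / 2 * r^M)"
        using Et glow \<delta> r0 C1 by (intro frac_le) auto
      also have "\<dots> = (2 * C1 * r / \<delta>) * r^k" using \<delta> r0 by (simp add: field_simps power_add)
      also have "\<dots> \<le> e * r^k"
      proof -
        have "2 * C1 * r / \<delta> \<le> e" using rC1 \<delta> r0 by (simp add: divide_le_eq algebra_simps)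
        then show ?thesis using r0 by (intro mult_right_mono) auto
      qed
      finally show "norm (h \<zeta> / g \<zeta> - Lf \<zeta>) \<le> e * norm (\<zeta> $ i0) ^ k" by (simp add: r_def)
    qed
  qed
qed

end

lemma homog_fun_comp:
  assumes c: "mpoly c" and H: "\<And>t. peval c (t *s \<eta>) = t^j * peval c \<eta>"
  shows "peval (hcomp j c) \<eta> = peval c \<eta>"
proof -
  obtain D0 where "deg_le D0 c" using mpoly_deg[OF c] by blast
  define D where "D = max D0 j"
  have dD: "deg_le D c" using \<open>deg_le D0 c\<close> by (rule deg_le_mono) (simp add: D_def)
  define q where "q = ser (\<lambda>m. peval (hcomp m c) \<eta>) D - monom (peval c \<eta>) j"
  have "poly q t = 0" for t
    using peval_scale_sum[OF c dD, of t \<eta>] H[of t]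
    by (simp add: q_def poly_ser poly_monom mult.commute)
  then have "q = 0" by (simp add: poly_eq_poly_eq_iff[symmetric] fun_eq_iff)
  then have "coeff (ser (\<lambda>m. peval (hcomp m c) \<eta>) D) j = coeff (monom (peval c \<eta>) j) j"
    by (simp add: q_def)
  then show ?thesis by (simp add: coeff_ser D_def)
qed

context setting begin

lemma ray_h_minus_k:
  assumes eta: "\<eta> \<in> AR c"
      and lim: "\<forall>\<epsilon>>0. eventually (\<lambda>t. norm (h (t *\<^sub>R \<eta>) / g (t *\<^sub>R \<eta>) - L t) \<le> \<epsilon> * t^k) (at_right 0)"
      and e: "\<epsilon> > 0"
  shows "eventually (\<lambda>t. norm (h (t *\<^sub>R \<eta>) - L t * g (t *\<^sub>R \<eta>)) \<le> \<epsilon> * t ^ (M + k)) (at_right 0)"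
proof -
  define C where "C = (\<Sum>j\<le>N. norm (peval (P j) \<eta>))"
  have C0: "C \<ge> 0" unfolding C_def by (intro sum_nonneg) auto
  have ev1: "eventually (\<lambda>t. norm (h (t *\<^sub>R \<eta>) / g (t *\<^sub>R \<eta>) - L t) \<le> \<epsilon> / (C + 1) * t^k) (at_right 0)"
  proof -
    have pos: "\<epsilon> / (C + 1) > 0" using e C0 by (simp add: add_nonneg_pos)
    show ?thesis using lim[rule_format, OF pos] .
  qed
  have ev2: "eventually (\<lambda>t::real. 0 < t \<and> t < 1) (at_right 0)"
    by (auto simp: eventually_at_right_field intro!: exI[of _ 1])
  have ev3: "eventually (\<lambda>t. g (t *\<^sub>R \<eta>) \<noteq> 0) (at_right 0)"
    by (rule g_nonzero_ray) (use AR_rhp[OF eta] in auto)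
  show ?thesis using ev1 ev2 ev3
  proof eventually_elim
    case (elim t)
    have "h (t *\<^sub>R \<eta>) - L t * g (t *\<^sub>R \<eta>) = (h (t *\<^sub>R \<eta>) / g (t *\<^sub>R \<eta>) - L t) * g (t *\<^sub>R \<eta>)"
      using elim(3) by (simp add: field_simps)
    then have "norm (h (t *\<^sub>R \<eta>) - L t * g (t *\<^sub>R \<eta>)) = norm (h (t *\<^sub>R \<eta>) / g (t *\<^sub>R \<eta>) - L t) * norm (g (t *\<^sub>R \<eta>))"
      by (simp add: norm_mult)
    also have "\<dots> \<le> (\<epsilon> / (C + 1) * t^k) * (t ^ M * C)"
      using elim g_ray_bound[of t \<eta>] C0 e by (intro mult_mono) (auto simp: C_def)
    also have "\<dots> = (\<epsilon> * t^(M+k)) * (C / (C+1))" by (simp add: field_simps power_add)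
    also have "\<dots> \<le> (\<epsilon> * t^(M+k)) * 1" using C0 e elim
      by (intro mult_left_mono) auto
    finally show ?case by simp
  qed
qed

lemma coeffP': "coeff (ser (\<lambda>j. peval (P j) \<eta>) N) l = peval (P l) \<eta>"
  using N_prop(1)[of l] by (auto simp: coeff_ser)

lemma coeffQ': "coeff (ser (\<lambda>j. peval (Q j) \<eta>) N) l = peval (Q l) \<eta>"
  using N_prop(2)[of l] by (auto simp: coeff_ser)

lemma onlyif:
  fixes L :: "'d cpoly" and i0 :: 'd
  assumes k: "k \<ge> 1" and L: "mpoly L" "deg_le k L"
    and lo: "little_o_AR i0 2 k (\<lambda>\<zeta>. h \<zeta> / g \<zeta> - peval L \<zeta>)"
  shows "\<exists>F :: nat \<Rightarrow> 'd cpoly. \<forall>j\<in>{1..k}. mpoly (F j) \<and>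
              (\<forall>\<zeta>. peval (P M) \<zeta> * peval (F j) \<zeta> =
                   peval (Q (M + j)) \<zeta> - \<nu> * peval (P (M + j)) \<zeta>
                   - (\<Sum>i\<in>{1..<j}. peval (F i) \<zeta> * peval (P (M + j - i)) \<zeta>))"
proof -
  define LL where "LL i = (if i \<le> k then hcomp i L else (\<lambda>_. 0))" for i
  have LLs: "peval L (t *s \<eta>) = (\<Sum>i\<le>k. peval (LL i) \<eta> * t ^ i)" for t \<eta>
    by (simp add: peval_scale_sum[OF L] LL_def mult.commute)
  have coeffL: "coeff (ser (\<lambda>i. peval (LL i) \<eta>) k) i = peval (LL i) \<eta>" for \<eta> i
    by (simp add: coeff_ser LL_def)
  have key: "peval (Q m) \<eta> - (\<Sum>i\<le>m. peval (LL i) \<eta> * peval (P (m - i)) \<eta>) = 0" if m: "m \<le> M + k" for m \<eta>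
  proof (rule ball_ray_extend[of _ 2])
    show "polyfun (\<lambda>\<eta>. peval (Q m) \<eta> - (\<Sum>i\<le>m. peval (LL i) \<eta> * peval (P (m - i)) \<eta>))"
      by (intro polyfun_diff polyfun_sum polyfun_mult polyfun_peval) auto
    fix \<eta> :: "complex ^ 'd" assume "\<eta> \<in> ball unit_pt ((2 - 1) / (2 + 1 :: real))"
    then have eta: "\<eta> \<in> AR 2" using ball_AR[of 2] by auto
    have lim: "\<forall>\<epsilon>>0. eventually (\<lambda>t. norm (h (t *\<^sub>R \<eta>) / g (t *\<^sub>R \<eta>) - peval L (t *\<^sub>R \<eta>)) \<le> \<epsilon> * t^k) (at_right 0)"
    proof (intro allI impI)
      fix \<epsilon> :: real assume \<epsilon>: "\<epsilon> > 0"
      define a where "a = norm (\<eta> $ i0) ^ k"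
      have a0: "a \<ge> 0" by (simp add: a_def)
      have "eventually (\<lambda>\<zeta>. norm (h \<zeta> / g \<zeta> - peval L \<zeta>) \<le> \<epsilon> / (a + 1) * norm (\<zeta> $ i0) ^ k) (at 0 within AR 2)"
      proof -
        have pos: "\<epsilon> / (a + 1) > 0" using \<epsilon> a0 by (simp add: add_nonneg_pos)
        show ?thesis using lo[unfolded little_o_AR_def, rule_format, OF pos] .
      qed
      then have ev: "eventually (\<lambda>t. norm (h (t *\<^sub>R \<eta>) / g (t *\<^sub>R \<eta>) - peval L (t *\<^sub>R \<eta>)) \<le> \<epsilon> / (a + 1) * norm ((t *\<^sub>R \<eta>) $ i0) ^ k) (at_right 0)"
        using ray_filterlim[OF eta] unfolding filterlim_iff by blast
      have ev2: "eventually (\<lambda>t::real. 0 < t) (at_right 0)"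
        by (auto simp: eventually_at_right_field intro!: exI[of _ 1])
      show "eventually (\<lambda>t. norm (h (t *\<^sub>R \<eta>) / g (t *\<^sub>R \<eta>) - peval L (t *\<^sub>R \<eta>)) \<le> \<epsilon> * t^k) (at_right 0)"
        using ev ev2
      proof eventually_elim
        case (elim t)
        have "norm ((t *\<^sub>R \<eta>) $ i0) ^ k = t^k * a" using elim(2) by (simp add: a_def power_mult_distrib)
        moreover have "\<epsilon> / (a + 1) * (t^k * a) \<le> \<epsilon> * t^k"
        proof -
          have "\<epsilon> / (a + 1) * (t^k * a) = (\<epsilon> * t^k) * (a / (a + 1))" by (simp add: field_simps)
          also have "\<dots> \<le> (\<epsilon> * t^k) * 1" using a0 \<epsilon> elim(2) by (intro mult_left_mono) auto
          finally show ?thesis by simp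
        qed
        ultimately show ?case using elim(1) by simp
      qed
    qed
    define pR where "pR = ser (\<lambda>j. peval (Q j) \<eta>) N - ser (\<lambda>i. peval (LL i) \<eta>) k * ser (\<lambda>j. peval (P j) \<eta>) N"
    have "poly pR (of_real t) = h (t *\<^sub>R \<eta>) - peval L (t *\<^sub>R \<eta>) * g (t *\<^sub>R \<eta>)" for t
      by (simp add: pR_def poly_ser h_scale g_scale LLs of_real_smult[symmetric])
    then have small: "\<forall>\<epsilon>>0. eventually (\<lambda>t. norm (poly pR (of_real t)) \<le> \<epsilon> * t^(M+k)) (at_right 0)"
      using ray_h_minus_k[OF eta lim] by simp
    have "coeff pR m = 0" by (rule poly_small[OF small m])
    then show "peval (Q m) \<eta> - (\<Sum>i\<le>m. peval (LL i) \<eta> * peval (P (m - i)) \<eta>) = 0"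
      by (simp add: pR_def coeff_mult coeffL coeffP' coeffQ')
  qed simp
  have X: "\<And>l. l < M \<Longrightarrow> peval (P l) \<eta> = 0" for \<eta> by (simp add: P_low)
  have L0const: "peval (LL 0) \<eta> = peval (LL 0) 0" for \<eta>
    using homog_scale[OF hcomp_homog, of 0 L 0 \<eta>] by (simp add: LL_def)
  have L0: "peval (LL 0) \<eta> = \<nu>" for \<eta>
  proof -
    obtain z0 where z0: "peval (P M) z0 \<noteq> 0" using PM_nonzero by blast
    have "(\<Sum>i\<le>M. peval (LL i) z0 * peval (P (M - i)) z0) = (\<Sum>i\<le>(0::nat). peval (LL i) z0 * peval (P (M - i)) z0)"
      by (rule sum.mono_neutral_right) (auto simp: P_low)
    then have "peval (Q M) z0 = peval (LL 0) z0 * peval (P M) z0" using key[of M z0] by simp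
    then have "peval (LL 0) z0 = \<nu>" using QP_low[of M z0] z0 by simp
    then show ?thesis using L0const[of \<eta>] L0const[of z0] by simp
  qed
  show ?thesis
  proof (intro exI[of _ "\<lambda>j. hcomp j L"] ballI conjI allI)
    fix j assume j: "j \<in> {1..k}"
    show "mpoly (hcomp j L)" by (rule hcomp_mpoly[OF L(1)])
    fix \<zeta>
    have j1: "j \<ge> 1" using j by simp
    have "peval (Q (M + j)) \<zeta> = (\<Sum>i\<le>M + j. peval (LL i) \<zeta> * peval (P (M + j - i)) \<zeta>)"
      using key[of "M + j" \<zeta>] j by simp
    also have "\<dots> = peval (LL 0) \<zeta> * peval (P (M + j)) \<zeta> + peval (LL j) \<zeta> * peval (P M) \<zeta>
        + (\<Sum>i\<in>{1..<j}. peval (LL i) \<zeta> * peval (P (M + j - i)) \<zeta>)"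
      by (rule conv_split2[OF X j1])
    also have "(\<Sum>i\<in>{1..<j}. peval (LL i) \<zeta> * peval (P (M + j - i)) \<zeta>) =
        (\<Sum>i\<in>{1..<j}. peval (hcomp i L) \<zeta> * peval (P (M + j - i)) \<zeta>)"
      by (rule sum.cong) (use j in \<open>auto simp: LL_def\<close>)
    also have "peval (LL j) \<zeta> = peval (hcomp j L) \<zeta>" using j by (simp add: LL_def)
    finally show "peval (P M) \<zeta> * peval (hcomp j L) \<zeta> = peval (Q (M + j)) \<zeta> - \<nu> * peval (P (M + j)) \<zeta>
        - (\<Sum>i\<in>{1..<j}. peval (hcomp i L) \<zeta> * peval (P (M + j - i)) \<zeta>)"
      using L0[of \<zeta>] by (simp add: algebra_simps)
  qed
qed

end

theorem theorem14p8:
  fixes p :: "'d::finite cpoly" and n :: "'d \<Rightarrow> nat" and M k :: nat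
    and P Q :: "nat \<Rightarrow> 'd cpoly" and \<nu> :: complex and i0 :: 'd
  assumes p_poly: "mpoly p"
    and nozero: "\<forall>z\<in>polydisc. peval p z \<noteq> 0"
    and mdeg: "multideg p n"
    and P_exp: "homog_expansion (\<lambda>\<zeta>. peval p (unit_pt - \<zeta>)) P"
    and Q_exp: "homog_expansion (\<lambda>\<zeta>. peval (ptilde n p) (unit_pt - \<zeta>)) Q"
    and order_M: "(\<forall>j<M. P j = (\<lambda>_. 0)) \<and> P M \<noteq> (\<lambda>_. 0)"
    and ntv: "nt_value (\<lambda>z. peval (ptilde n p) z / peval p z) unit_pt \<nu>"
    and k: "k \<ge> 1"
  shows "(nt_Ck i0 k (\<lambda>z. peval (ptilde n p) z / peval p z) unit_pt \<longleftrightarrow>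
           (\<exists>F :: nat \<Rightarrow> 'd cpoly. \<forall>j\<in>{1..k}. mpoly (F j) \<and>
              (\<forall>\<zeta>. peval (P M) \<zeta> * peval (F j) \<zeta> =
                   peval (Q (M + j)) \<zeta> - \<nu> * peval (P (M + j)) \<zeta>
                   - (\<Sum>i\<in>{1..<j}. peval (F i) \<zeta> * peval (P (M + j - i)) \<zeta>))))
         \<and> (\<forall>F :: nat \<Rightarrow> 'd cpoly. (\<forall>j\<in>{1..k}. mpoly (F j) \<and>
              (\<forall>\<zeta>. peval (P M) \<zeta> * peval (F j) \<zeta> =
                   peval (Q (M + j)) \<zeta> - \<nu> * peval (P (M + j)) \<zeta>
                   - (\<Sum>i\<in>{1..<j}. peval (F i) \<zeta> * peval (P (M + j - i)) \<zeta>)))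
           \<longrightarrow> (\<forall>c>1. little_o_AR i0 c k
                 (\<lambda>\<zeta>. peval (ptilde n p) (unit_pt - \<zeta>) / peval p (unit_pt - \<zeta>)
                       - (\<nu> + (\<Sum>j\<in>{1..k}. peval (F j) \<zeta>)))))"
proof -
  interpret S: setting p n M P Q \<nu>
    by (unfold_locales) (rule p_poly nozero P_exp Q_exp order_M ntv)+
  have part2: "\<forall>c>1. little_o_AR i0 c k
                 (\<lambda>\<zeta>. peval (ptilde n p) (unit_pt - \<zeta>) / peval p (unit_pt - \<zeta>)
                       - (\<nu> + (\<Sum>j\<in>{1..k}. peval (F j) \<zeta>)))"
    if hF: "\<forall>j\<in>{1..k}. mpoly (F j) \<and>
              (\<forall>\<zeta>. peval (P M) \<zeta> * peval (F j) \<zeta> =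
                   peval (Q (M + j)) \<zeta> - \<nu> * peval (P (M + j)) \<zeta>
                   - (\<Sum>i\<in>{1..<j}. peval (F i) \<zeta> * peval (P (M + j - i)) \<zeta>))" for F
  proof -
    interpret I: ifdir p n M P Q \<nu> k F
      by (unfold_locales) (rule k hF)+
    show ?thesis using I.H_main unfolding S.h_def S.g_def I.Lf_def by blast
  qed
  have part1: "nt_Ck i0 k (\<lambda>z. peval (ptilde n p) z / peval p z) unit_pt \<longleftrightarrow>
           (\<exists>F :: nat \<Rightarrow> 'd cpoly. \<forall>j\<in>{1..k}. mpoly (F j) \<and>
              (\<forall>\<zeta>. peval (P M) \<zeta> * peval (F j) \<zeta> =
                   peval (Q (M + j)) \<zeta> - \<nu> * peval (P (M + j)) \<zeta>
                   - (\<Sum>i\<in>{1..<j}. peval (F i) \<zeta> * peval (P (M + j - i)) \<zeta>)))"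
  proof
    assume "nt_Ck i0 k (\<lambda>z. peval (ptilde n p) z / peval p z) unit_pt"
    then obtain L where L: "mpoly L" "deg_le k L"
      and lo: "\<forall>c>1. little_o_AR i0 c k (\<lambda>\<zeta>. peval (ptilde n p) (unit_pt - \<zeta>) / peval p (unit_pt - \<zeta>) - peval L \<zeta>)"
      unfolding nt_Ck_def by auto
    have "little_o_AR i0 2 k (\<lambda>\<zeta>. S.h \<zeta> / S.g \<zeta> - peval L \<zeta>)"
      using lo unfolding S.h_def S.g_def by simp
    then show "\<exists>F :: nat \<Rightarrow> 'd cpoly. \<forall>j\<in>{1..k}. mpoly (F j) \<and>
              (\<forall>\<zeta>. peval (P M) \<zeta> * peval (F j) \<zeta> =
                   peval (Q (M + j)) \<zeta> - \<nu> * peval (P (M + j)) \<zeta>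
                   - (\<Sum>i\<in>{1..<j}. peval (F i) \<zeta> * peval (P (M + j - i)) \<zeta>))"
      by (rule S.onlyif[OF k L])
  next
    assume "\<exists>F :: nat \<Rightarrow> 'd cpoly. \<forall>j\<in>{1..k}. mpoly (F j) \<and>
              (\<forall>\<zeta>. peval (P M) \<zeta> * peval (F j) \<zeta> =
                   peval (Q (M + j)) \<zeta> - \<nu> * peval (P (M + j)) \<zeta>
                   - (\<Sum>i\<in>{1..<j}. peval (F i) \<zeta> * peval (P (M + j - i)) \<zeta>))"
    then obtain F where hF: "\<forall>j\<in>{1..k}. mpoly (F j) \<and>
              (\<forall>\<zeta>. peval (P M) \<zeta> * peval (F j) \<zeta> =
                   peval (Q (M + j)) \<zeta> - \<nu> * peval (P (M + j)) \<zeta>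
                   - (\<Sum>i\<in>{1..<j}. peval (F i) \<zeta> * peval (P (M + j - i)) \<zeta>))" by blast
    interpret I: ifdir p n M P Q \<nu> k F
      by (unfold_locales) (rule k hF)+
    define Lp where "Lp = (\<lambda>\<alpha>. cst \<nu> \<alpha> + (\<Sum>j\<in>{1..k}. hcomp j (F j) \<alpha>))"
    have mp: "mpoly Lp" unfolding Lp_def
      by (intro mpoly_add cst_mpoly mpoly_sum hcomp_mpoly I.F_mpoly) auto
    have dl: "deg_le k Lp" unfolding Lp_def
      by (intro deg_le_add deg_le_sum deg_le_mono[OF cst_deg] deg_le_mono[OF hcomp_deg]) auto
    have pe: "peval Lp \<zeta> = \<nu> + (\<Sum>j\<in>{1..k}. peval (F j) \<zeta>)" for \<zeta>
    proof -
      have m2: "mpoly (\<lambda>\<alpha>. \<Sum>j\<in>{1..k}. hcomp j (F j) \<alpha>)"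
        by (intro mpoly_sum hcomp_mpoly I.F_mpoly) auto
      have "peval Lp \<zeta> = peval (cst \<nu>) \<zeta> + peval (\<lambda>\<alpha>. \<Sum>j\<in>{1..k}. hcomp j (F j) \<alpha>) \<zeta>"
        unfolding Lp_def by (rule peval_add[OF cst_mpoly m2])
      also have "peval (\<lambda>\<alpha>. \<Sum>j\<in>{1..k}. hcomp j (F j) \<alpha>) \<zeta> = (\<Sum>j\<in>{1..k}. peval (hcomp j (F j)) \<zeta>)"
        by (rule peval_sum) (simp_all add: hcomp_mpoly I.F_mpoly)
      finally have "peval Lp \<zeta> = \<nu> + (\<Sum>j\<in>{1..k}. peval (hcomp j (F j)) \<zeta>)"
        by (simp add: peval_cst)
      also have "(\<Sum>j\<in>{1..k}. peval (hcomp j (F j)) \<zeta>) = (\<Sum>j\<in>{1..k}. peval (F j) \<zeta>)"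
        by (rule sum.cong[OF refl], rule homog_fun_comp[OF I.F_mpoly I.F_homog])
      finally show ?thesis .
    qed
    show "nt_Ck i0 k (\<lambda>z. peval (ptilde n p) z / peval p z) unit_pt"
      unfolding nt_Ck_def
      using part2[OF hF] mp dl by (intro exI[of _ Lp]) (simp add: pe)
  qed
  show ?thesis using part1 part2 by blast
qed


end
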